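(* Fix $r\in\{0,1\}$ and $n\ge 0$. Let $\pi\in B_n$ be a hyperoctahedral involution with exactly $d$ barred two-cycles. Then the sign of its domino insertion tableau satisfies \[ \mathrm{sign}\big(P_d^r(\pi)\big)=(-1)^{d}. \]
   Context: Partitions are identified with Young diagrams in English notation: cell $(k,l)$ lies in row $k$ (rows numbered $1,2,\dots$ from top to bottom) and column $l$ (columns numbered $1,2,\dots$ from left to right). A domino is a set of two cells sharing an edge; it is vertical if both cells lie in the same column, horizontal otherwise. For $r\ge0$ let $\delta_r=(r,r-1,\dots,1)$ ($\delta_0=\emptyset$). Every partition $\lambda$ has a 2-core $\tilde\lambda$ (obtained by repeatedly removing dominoes whose removal leaves a partition, until impossible), which equals $\delta_r$ for a unique $r$. $\mathcal P_r(n)$ denotes the set of partitions with 2-core $\delta_r$ and size $|\delta_r|+2n$. A standard domino tableau (SDT) of shape $\lambda\in\mathcal P_r(n)$ is a chain of partitions $\delta_r=\lambda^0\subset\lambda^1\subset\cdots\subset\lambda^n=\lambda$ with each $\lambda^k/\lambda^{k-1}$ a domino, called the domino with value $k$. Its spin $sp(D)$ is half the number of vertical dominoes. Signed permutations: $B_n$ is the set of words $\pi=\pi_1\cdots\pi_n$ in letters from $\{1,\dots,n,\bar1,\dots,\bar n\}$ such that each $k\in[n]$ occurs exactly once, barred or unbarred. $\pi$ is an involution if for each $k\in[n]$ either $\pi_k=k$ (fixed point), $\pi_k=\bar k$ (barred fixed point), or there is $l\ne k$ with $\pi_k=l,\pi_l=k$ (two-cycle $\{k,l\}$) or with $\pi_k=\bar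 l,\pi_l=\bar k$ (barred two-cycle $\{k,l\}$). Domino insertion via growth diagrams: for $\pi\in B_n$ let $M(i,j)=1$ if $\pi_i=j$, $M(i,j)=-1$ if $\pi_i=\bar j$, $M(i,j)=0$ otherwise ($i,j\in[n]$). The growth diagram is the array of partitions $\lambda_{(i,j)}$, $1\le i,j\le n+1$, with $\lambda_{(1,j)}=\lambda_{(i,1)}=\delta_r$, and, for $i,j\in[n]$, writing $\lambda=\lambda_{(i,j)},\mu=\lambda_{(i+1,j)},\nu=\lambda_{(i,j+1)}$, $\rho=\lambda_{(i+1,j+1)}$ is determined by: (1) if $M(i,j)=1$ (then $\lambda=\mu=\nu$), $\rho$ is $\lambda$ with two cells appended to its first row; (2) if $M(i,j)=-1$ (then $\lambda=\mu=\nu$), $\rho$ is $\lambda$ with two cells appended to its first column; (3) if $M(i,j)=0$ and $\lambda=\mu$ or $\lambda=\nu$, $\rho$ is the largest of $\lambda,\mu,\nu$; (4) otherwise $M(i,j)=0$ and $\gamma=\nu/\lambda$, $\gamma'=\mu/\lambda$ are dominoes: if $\gamma\cap\gamma'=\emptyset$ then $\rho=\lambda\cup\gamma\cup\gamma'$; if $\gamma\cap\gamma'$ is a single cell $(k,l)$ then $\rho=\lambda\cup\gamma\cup\gamma'\cup\{(k+1,l+1)\}$; if $\gamma=\gamma'$ is vertical in column $l$, $\rho$ is $\lambda\cup\gamma$ with two cells appended to the bottom of column $l+1$; if $\gamma=\gamma'$ is horizontal in row $k$, $\rho$ is $\lambda\cup\gamma$ with two cells appended to the end of row $k+1$. These rules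 are well defined, and consecutive partitions in the last row and last column differ by exactly one domino. The insertion tableau $P_d^r(\pi)$ is the SDT given by the chain $\lambda_{(n+1,1)}\subset\lambda_{(n+1,2)}\subset\cdots\subset\lambda_{(n+1,n+1)}$ and the recording tableau $Q_d^r(\pi)$ is the SDT given by $\lambda_{(1,n+1)}\subset\lambda_{(2,n+1)}\subset\cdots\subset\lambda_{(n+1,n+1)}$. Sign of an SDT $D$ with 2-core $\delta_0$ or $\delta_1$: let $T(D)$ be the standard Young tableau obtained (for $r=0$) by filling the two cells of the domino with value $k$ with $2k-1,2k$, or (for $r=1$) by putting $1$ in the core cell and filling the domino with value $k$ with $2k,2k+1$, in each case the smaller number in the left (horizontal domino) or upper (vertical domino) cell. The reading word of a standard Young tableau reads the rows from top to bottom, each from left to right; $\mathrm{sign}(D)$ is the sign of the reading word of $T(D)$ as a permutation. *)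

theory Defs
  imports "HOL-Combinatorics.Permutations" "HOL-Library.Product_Lexorder"
begin

text \<open>Young diagrams as finite sets of cells (row, column), both numbered from 1
(English notation). Ordering of pairs is lexicographic (Product_Lexorder).\<close>

type_synonym cell = "nat \<times> nat"

definition staircase :: "nat \<Rightarrow> cell set" where
  "staircase r = {(k, l). 1 \<le> k \<and> 1 \<le> l \<and> k + l \<le> r + 1}"

definition row_len :: "cell set \<Rightarrow> nat \<Rightarrow> nat" where
  "row_len S k = card {l. (k, l) \<in> S}"

definition col_len :: "cell set \<Rightarrow> nat \<Rightarrow> nat" where
  "col_len S l = card {k. (k, l) \<in> S}"

definition add_row :: "cell set \<Rightarrow> nat \<Rightarrow> cell set" where
  "add_row S k = S \<union> {(k, row_len S k + 1), (k, row_len S k + 2)}"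

definition add_col :: "cell set \<Rightarrow> nat \<Rightarrow> cell set" where
  "add_col S l = S \<union> {(col_len S l + 1, l), (col_len S l + 2, l)}"

definition vertical_domino :: "cell set \<Rightarrow> bool" where
  "vertical_domino g \<longleftrightarrow> (\<exists>k l. g = {(k, l), (k + 1, l)})"

definition horizontal_domino :: "cell set \<Rightarrow> bool" where
  "horizontal_domino g \<longleftrightarrow> (\<exists>k l. g = {(k, l), (k, l + 1)})"

text \<open>Local growth rule: m = M(i,j), lam = lambda_(i,j), mu = lambda_(i+1,j),
  nu = lambda_(i,j+1); result is rho = lambda_(i+1,j+1).\<close>
definition local_rule :: "int \<Rightarrow> cell set \<Rightarrow> cell set \<Rightarrow> cell set \<Rightarrow> cell set" where
  "local_rule m lam mu nu =
    (if m = 1 then add_row lam 1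
     else if m = -1 then add_col lam 1
     else if lam = mu then nu
     else if lam = nu then mu
     else (let g = nu - lam; g' = mu - lam in
       if g \<inter> g' = {} then lam \<union> g \<union> g'
       else if card (g \<inter> g') = 1 then
         (let (k, l) = the_elem (g \<inter> g') in lam \<union> g \<union> g' \<union> {(k + 1, l + 1)})
       else if vertical_domino g then add_col (lam \<union> g) (snd (Min g) + 1)
       else add_row (lam \<union> g) (fst (Min g) + 1)))"

text \<open>Signed permutations as functions on {1..n} with values in
  {1..n} (unbarred) and {-1..-n} (barred).\<close>
definition signed_perm :: "nat \<Rightarrow> (nat \<Rightarrow> int) \<Rightarrow> bool" where
  "signed_perm n \<pi> \<longleftrightarrow>
     (\<forall>i\<in>{1..n}. \<pi> i \<noteq> 0 \<and> nat \<bar>\<pi> i\<bar> \<in> {1..n}) \<and>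
     (\<forall>k\<in>{1..n}. \<exists>!i. i \<in> {1..n} \<and> nat \<bar>\<pi> i\<bar> = k)"

definition signed_involution :: "nat \<Rightarrow> (nat \<Rightarrow> int) \<Rightarrow> bool" where
  "signed_involution n \<pi> \<longleftrightarrow> signed_perm n \<pi> \<and>
     (\<forall>k\<in>{1..n}. \<pi> k = int k \<or> \<pi> k = - int k \<or>
        (\<exists>l\<in>{1..n}. l \<noteq> k \<and> \<pi> k = int l \<and> \<pi> l = int k) \<or>
        (\<exists>l\<in>{1..n}. l \<noteq> k \<and> \<pi> k = - int l \<and> \<pi> l = - int k))"

definition barred_two_cycles :: "nat \<Rightarrow> (nat \<Rightarrow> int) \<Rightarrow> nat set set" where
  "barred_two_cycles n \<pi> = {{k, l} | k l. k \<in> {1..n} \<and> l \<in> {1..n} \<and> k \<noteq> l \<and>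
      \<pi> k = - int l \<and> \<pi> l = - int k}"

definition Mat :: "(nat \<Rightarrow> int) \<Rightarrow> nat \<Rightarrow> nat \<Rightarrow> int" where
  "Mat \<pi> i j = (if \<pi> i = int j then 1 else if \<pi> i = - int j then -1 else 0)"

text \<open>growth r pi a b is lambda_(a+1,b+1) of the growth diagram.\<close>
fun growth :: "nat \<Rightarrow> (nat \<Rightarrow> int) \<Rightarrow> nat \<Rightarrow> nat \<Rightarrow> cell set" where
  "growth r \<pi> 0 b = staircase r"
| "growth r \<pi> (Suc a) 0 = staircase r"
| "growth r \<pi> (Suc a) (Suc b) =
     local_rule (Mat \<pi> (a + 1) (b + 1)) (growth r \<pi> a b) (growth r \<pi> (Suc a) b)
       (growth r \<pi> a (Suc b))"

text \<open>A standard domino tableau with n dominoes is represented as the chain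
  D 0 \<subseteq> D 1 \<subseteq> ... \<subseteq> D n. Insertion tableau: k-th partition is lambda_(n+1,k+1).\<close>
definition insertion_tableau :: "nat \<Rightarrow> nat \<Rightarrow> (nat \<Rightarrow> int) \<Rightarrow> nat \<Rightarrow> cell set" where
  "insertion_tableau r n \<pi> k = growth r \<pi> n k"

text \<open>Young tableau T(D): core cell (r = 1) gets 1; domino with value k gets
  2k-1+r in its lexicographically smaller (left resp. upper) cell and 2k+r in the other.\<close>
definition syt_of_sdt :: "nat \<Rightarrow> (nat \<Rightarrow> cell set) \<Rightarrow> cell \<Rightarrow> nat" where
  "syt_of_sdt r D c =
     (if c \<in> D 0 then 1
      else (let k = (LEAST k. c \<in> D k) in
            if c = Min (D k - D (k - 1)) then 2 * k - 1 + r else 2 * k + r))"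

definition reading_word :: "nat \<Rightarrow> nat \<Rightarrow> (nat \<Rightarrow> cell set) \<Rightarrow> nat list" where
  "reading_word r n D = map (syt_of_sdt r D) (sorted_list_of_set (D n))"

definition word_perm :: "nat list \<Rightarrow> nat \<Rightarrow> nat" where
  "word_perm w i = (if 1 \<le> i \<and> i \<le> length w then w ! (i - 1) else i)"

definition sdt_sign :: "nat \<Rightarrow> nat \<Rightarrow> (nat \<Rightarrow> cell set) \<Rightarrow> int" where
  "sdt_sign r n D = sign (word_perm (reading_word r n D))"

end

theory Submission
  imports Defs
begin

definition young :: "cell set \<Rightarrow> bool" where
  "young S \<longleftrightarrow> finite S \<and> (\<forall>k l. (k, l) \<in> S \<longrightarrow> 1 \<le> k \<and> 1 \<le> l) \<and>
     (\<forall>k l k' l'. (k, l) \<in> S \<longrightarrow> 1 \<le> k' \<longrightarrow> k' \<le> k \<longrightarrow> 1 \<le> l' \<longrightarrow> l' \<le> l \<longrightarrow> (k', l') \<in> S)"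

lemma youngD:
  assumes "young S"
  shows "finite S" "\<And>k l. (k, l) \<in> S \<Longrightarrow> 1 \<le> k" "\<And>k l. (k, l) \<in> S \<Longrightarrow> 1 \<le> l"
    "\<And>k l k' l'. (k, l) \<in> S \<Longrightarrow> 1 \<le> k' \<Longrightarrow> k' \<le> k \<Longrightarrow> 1 \<le> l' \<Longrightarrow> l' \<le> l \<Longrightarrow> (k', l') \<in> S"
  using assms unfolding young_def by blast+

lemma young_finite_row: "finite S \<Longrightarrow> finite {l. (k, l) \<in> S}"
proof -
  assume "finite S"
  then have "finite (snd ` S)" by simp
  moreover have "{l. (k, l) \<in> S} \<subseteq> snd ` S" by force
  ultimately show ?thesis by (rule finite_subset[rotated])
qed

lemma young_finite_col: "finite S \<Longrightarrow> finite {k. (k, l) \<in> S}"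
proof -
  assume "finite S"
  then have "finite (fst ` S)" by simp
  moreover have "{k. (k, l) \<in> S} \<subseteq> fst ` S" by force
  ultimately show ?thesis by (rule finite_subset[rotated])
qed

lemma young_row:
  assumes y: "young S" and k: "1 \<le> k"
  shows "(k, l) \<in> S \<longleftrightarrow> 1 \<le> l \<and> l \<le> row_len S k"
proof -
  let ?X = "{l. (k, l) \<in> S}"
  have fin: "finite ?X" by (rule young_finite_row[OF youngD(1)[OF y]])
  obtain m where Xm: "?X = {1..m}"
  proof (cases "?X = {}")
    case True then show ?thesis using that[of 0] by simp
  next
    case False
    define m where "m = Max ?X"
    have mX: "m \<in> ?X" using Max_in[OF fin False] m_def by simp
    have Xm: "?X = {1..m}"
    proof
      show "?X \<subseteq> {1..m}"
      proof
        fix x assume "x \<in> ?X"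
        then show "x \<in> {1..m}" using Max_ge[OF fin, of x] m_def youngD(3)[OF y, of k x] by simp
      qed
      show "{1..m} \<subseteq> ?X"
      proof
        fix x assume "x \<in> {1..m}"
        then show "x \<in> ?X" using mX youngD(4)[OF y, of k m k x] k by simp
      qed
    qed
    then show ?thesis by (rule that)
  qed
  have "row_len S k = m" unfolding row_len_def using Xm by simp
  moreover from Xm have "l \<in> ?X \<longleftrightarrow> l \<in> {1..m}" by (simp only:)
  ultimately show ?thesis by simp
qed

lemma young_col:
  assumes y: "young S" and l: "1 \<le> l"
  shows "(k, l) \<in> S \<longleftrightarrow> 1 \<le> k \<and> k \<le> col_len S l"
proof -
  let ?X = "{k. (k, l) \<in> S}"
  have fin: "finite ?X" by (rule young_finite_col[OF youngD(1)[OF y]])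
  obtain m where Xm: "?X = {1..m}"
  proof (cases "?X = {}")
    case True then show ?thesis using that[of 0] by simp
  next
    case False
    define m where "m = Max ?X"
    have mX: "m \<in> ?X" using Max_in[OF fin False] m_def by simp
    have Xm: "?X = {1..m}"
    proof
      show "?X \<subseteq> {1..m}"
      proof
        fix x assume "x \<in> ?X"
        then show "x \<in> {1..m}" using Max_ge[OF fin, of x] m_def youngD(2)[OF y, of x l] by simp
      qed
      show "{1..m} \<subseteq> ?X"
      proof
        fix x assume "x \<in> {1..m}"
        then show "x \<in> ?X" using mX youngD(4)[OF y, of m l x l] l by simp
      qed
    qed
    then show ?thesis by (rule that)
  qed
  have "col_len S l = m" unfolding col_len_def using Xm by simp
  moreover from Xm have "k \<in> ?X \<longleftrightarrow> k \<in> {1..m}" by (simp only:)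
  ultimately show ?thesis by simp
qed

lemma young_add_row:
  assumes y: "young S" and k: "1 \<le> k"
    and c: "k = 1 \<or> (k - 1, row_len S k + 2) \<in> S"
  shows "young (add_row S k)"
    and "(k, row_len S k + 1) \<notin> S" "(k, row_len S k + 2) \<notin> S"
proof -
  let ?c = "row_len S k"
  show n1: "(k, ?c + 1) \<notin> S" "(k, ?c + 2) \<notin> S" using young_row[OF y k] by auto
  show "young (add_row S k)"
    unfolding young_def add_row_def
  proof (intro conjI allI impI)
    show "finite (S \<union> {(k, ?c + 1), (k, ?c + 2)})" using youngD(1)[OF y] by simp
  next
    fix a b assume "(a, b) \<in> S \<union> {(k, ?c + 1), (k, ?c + 2)}"
    then show "1 \<le> a" using youngD(2,3)[OF y] k by auto
  next
    fix a b assume "(a, b) \<in> S \<union> {(k, ?c + 1), (k, ?c + 2)}"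
    then show "1 \<le> b" using youngD(2,3)[OF y] k by auto
  next
    fix a b a' b'
    assume ab: "(a, b) \<in> S \<union> {(k, ?c + 1), (k, ?c + 2)}" and h: "1 \<le> a'" "a' \<le> a" "1 \<le> b'" "b' \<le> b"
    show "(a', b') \<in> S \<union> {(k, ?c + 1), (k, ?c + 2)}"
    proof (cases "(a, b) \<in> S")
      case True then show ?thesis using youngD(4)[OF y True h] by simp
    next
      case False
      then have ab': "a = k" "b \<le> ?c + 2" using ab by auto
      show ?thesis
      proof (cases "a' = k")
        case True
        then show ?thesis using young_row[OF y k, of b'] h ab' by (cases "b' \<le> ?c") auto
      next
        case False
        then have "a' \<le> k - 1" "k \<noteq> 1" using h ab' by auto
        then have "(k - 1, ?c + 2) \<in> S" using c by simp
        then show ?thesis using youngD(4)[OF y, of "k - 1" "?c + 2" a' b'] h ab' \<open>a' \<le> k - 1\<close> by simp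
      qed
    qed
  qed
qed

lemma young_add_col:
  assumes y: "young S" and l: "1 \<le> l"
    and c: "l = 1 \<or> (col_len S l + 2, l - 1) \<in> S"
  shows "young (add_col S l)"
    and "(col_len S l + 1, l) \<notin> S" "(col_len S l + 2, l) \<notin> S"
proof -
  let ?c = "col_len S l"
  show n1: "(?c + 1, l) \<notin> S" "(?c + 2, l) \<notin> S" using young_col[OF y l] by auto
  show "young (add_col S l)"
    unfolding young_def add_col_def
  proof (intro conjI allI impI)
    show "finite (S \<union> {(?c + 1, l), (?c + 2, l)})" using youngD(1)[OF y] by simp
  next
    fix a b assume "(a, b) \<in> S \<union> {(?c + 1, l), (?c + 2, l)}"
    then show "1 \<le> a" using youngD(2,3)[OF y] l by auto
  next
    fix a b assume "(a, b) \<in> S \<union> {(?c + 1, l), (?c + 2, l)}"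
    then show "1 \<le> b" using youngD(2,3)[OF y] l by auto
  next
    fix a b a' b'
    assume ab: "(a, b) \<in> S \<union> {(?c + 1, l), (?c + 2, l)}" and h: "1 \<le> a'" "a' \<le> a" "1 \<le> b'" "b' \<le> b"
    show "(a', b') \<in> S \<union> {(?c + 1, l), (?c + 2, l)}"
    proof (cases "(a, b) \<in> S")
      case True then show ?thesis using youngD(4)[OF y True h] by simp
    next
      case False
      then have ab': "b = l" "a \<le> ?c + 2" using ab by auto
      show ?thesis
      proof (cases "b' = l")
        case True
        then show ?thesis using young_col[OF y l, of a'] h ab' by (cases "a' \<le> ?c") auto
      next
        case False
        then have "b' \<le> l - 1" "l \<noteq> 1" using h ab' by auto
        then have "(?c + 2, l - 1) \<in> S" using c by simp
        then show ?thesis using youngD(4)[OF y, of "?c + 2" "l - 1" a' b'] h ab' \<open>b' \<le> l - 1\<close> by simp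
      qed
    qed
  qed
qed

lemma young_Un: "young A \<Longrightarrow> young B \<Longrightarrow> young (A \<union> B)"
  unfolding young_def by blast

lemma young_staircase: "young (staircase r)"
proof -
  have "staircase r \<subseteq> {1..r+1} \<times> {1..r+1}" unfolding staircase_def by auto
  then have "finite (staircase r)" by (rule finite_subset) simp
  then show ?thesis unfolding young_def staircase_def by auto
qed

definition dom2 :: "cell set \<Rightarrow> bool" where
  "dom2 g \<longleftrightarrow> (\<exists>k l. g = {(k, l), (k + 1, l)} \<or> g = {(k, l), (k, l + 1)})"

definition step :: "cell set \<Rightarrow> cell set \<Rightarrow> bool" where
  "step a b \<longleftrightarrow> a \<subseteq> b \<and> (b = a \<or> dom2 (b - a))"

definition vd :: "cell set \<Rightarrow> nat \<Rightarrow> bool" where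
  "vd X l \<longleftrightarrow> (\<exists>k. X = {(k, l), (k + 1, l)})"

definition SH :: "cell set \<Rightarrow> cell set \<Rightarrow> nat" where
  "SH a b = (if \<exists>l. even l \<and> vd (b - a) l then 1 else 0)"

definition SV :: "cell set \<Rightarrow> cell set \<Rightarrow> nat" where
  "SV a b = (if \<exists>l. odd l \<and> vd (b - a) l then 1 else 0)"

lemma vd_vert: "vd {(k, l), (k + 1, l)} l' \<longleftrightarrow> l' = l"
  unfolding vd_def by (auto simp: doubleton_eq_iff)

lemma vd_horiz: "\<not> vd {(k, l), (k, l + 1)} l'"
  unfolding vd_def by (auto simp: doubleton_eq_iff)

lemma vd_empty: "\<not> vd {} l"
  unfolding vd_def by auto

lemma SH_vert: "b - a = {(k, l), (k + 1, l)} \<Longrightarrow> SH a b = (if even l then 1 else 0)"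
  unfolding SH_def using vd_vert by auto

lemma SV_vert: "b - a = {(k, l), (k + 1, l)} \<Longrightarrow> SV a b = (if odd l then 1 else 0)"
  unfolding SV_def using vd_vert by auto

lemma SH_horiz: "b - a = {(k, l), (k, l + 1)} \<Longrightarrow> SH a b = 0"
  unfolding SH_def using vd_horiz by auto

lemma SV_horiz: "b - a = {(k, l), (k, l + 1)} \<Longrightarrow> SV a b = 0"
  unfolding SV_def using vd_horiz by auto

lemma SH_same: "SH a a = 0"
  unfolding SH_def using vd_empty by auto

lemma SV_same: "SV a a = 0"
  unfolding SV_def using vd_empty by auto

lemma dom2_card: "dom2 g \<Longrightarrow> card g = 2"
  unfolding dom2_def by auto

lemma dom2_vert: "dom2 {(k, l), (k + 1, l)}"
  unfolding dom2_def by (rule exI[of _ k], rule exI[of _ l]) simp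

lemma dom2_horiz: "dom2 {(k, l), (k, l + 1)}"
  unfolding dom2_def by (rule exI[of _ k], rule exI[of _ l]) simp

lemma card_step:
  assumes "finite b" "a \<subseteq> b" "dom2 (b - a)"
  shows "card b = card a + 2"
proof -
  have fa: "finite a" using assms(1,2) by (rule finite_subset[rotated])
  have e: "b = a \<union> (b - a)" using assms(2) by auto
  have "card (a \<union> (b - a)) = card a + card (b - a)"
    by (rule card_Un_disjoint) (use fa assms(1) in auto)
  then have "card b = card a + card (b - a)" using e by simp
  then show ?thesis using dom2_card[OF assms(3)] by simp
qed

definition good :: "int \<Rightarrow> cell set \<Rightarrow> cell set \<Rightarrow> cell set \<Rightarrow> cell set \<Rightarrow> bool" where
  "good m lam mu nu rho \<longleftrightarrow> young rho \<and> step mu rho \<and> step nu rho \<and>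
     card rho + card lam = card mu + card nu + (if m = 0 then 0 else 2) \<and>
     even (SV lam mu + SH mu rho + SH lam nu + SV nu rho + (if m = -1 then 1 else 0)) \<and>
     (mu = nu \<longrightarrow> even (SV lam mu + SH mu rho))"

lemma goodI:
  assumes "young rho" "step mu rho" "step nu rho"
    "card rho + card lam = card mu + card nu + (if m = 0 then 0 else 2)"
    "even (SV lam mu + SH mu rho + SH lam nu + SV nu rho + (if m = -1 then 1 else 0))"
    "mu = nu \<Longrightarrow> even (SV lam mu + SH mu rho)"
  shows "good m lam mu nu rho"
  unfolding good_def using assms by blast

lemma goodD:
  assumes "good m lam mu nu rho"
  shows "young rho" "step mu rho" "step nu rho"
    "card rho + card lam = card mu + card nu + (if m = 0 then 0 else 2)"
    "even (SV lam mu + SH mu rho + SH lam nu + SV nu rho + (if m = -1 then 1 else 0))"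
    "mu = nu \<Longrightarrow> even (SV lam mu + SH mu rho)"
  using assms unfolding good_def by blast+

lemma SH_cong: "b - a = d - c \<Longrightarrow> SH a b = SH c d"
  unfolding SH_def by simp

lemma SV_cong: "b - a = d - c \<Longrightarrow> SV a b = SV c d"
  unfolding SV_def by simp

lemma step_refl: "step a a"
  unfolding step_def by simp

lemma case_p1:
  assumes y: "young lam"
  shows "good 1 lam lam lam (add_row lam 1)"
proof -
  let ?c = "row_len lam 1"
  have yr: "young (add_row lam 1)" and n1: "(1, ?c + 1) \<notin> lam" and n2: "(1, ?c + 2) \<notin> lam"
    using young_add_row[OF y, of 1] by auto
  have D: "add_row lam 1 - lam = {(1, ?c + 1), (1, ?c + 1 + 1)}"
    using n1 n2 unfolding add_row_def by auto
  have sub: "lam \<subseteq> add_row lam 1" unfolding add_row_def by auto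
  have st: "step lam (add_row lam 1)" unfolding step_def using sub D dom2_horiz by simp
  have cd: "card (add_row lam 1) = card lam + 2"
    using card_step[OF youngD(1)[OF yr] sub] D dom2_horiz by simp
  show ?thesis unfolding good_def
    using yr st cd SH_horiz[OF D] SV_horiz[OF D] SH_same SV_same by simp
qed

lemma case_m1:
  assumes y: "young lam"
  shows "good (-1) lam lam lam (add_col lam 1)"
proof -
  let ?c = "col_len lam 1"
  have yr: "young (add_col lam 1)" and n1: "(?c + 1, 1) \<notin> lam" and n2: "(?c + 2, 1) \<notin> lam"
    using young_add_col[OF y, of 1] by auto
  have D: "add_col lam 1 - lam = {(?c + 1, 1), (?c + 1 + 1, 1)}"
    using n1 n2 unfolding add_col_def by auto
  have sub: "lam \<subseteq> add_col lam 1" unfolding add_col_def by auto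
  have st: "step lam (add_col lam 1)" unfolding step_def using sub D dom2_vert by simp
  have cd: "card (add_col lam 1) = card lam + 2"
    using card_step[OF youngD(1)[OF yr] sub] D dom2_vert by simp
  show ?thesis unfolding good_def
    using yr st cd SH_vert[OF D] SV_vert[OF D] SH_same SV_same by simp
qed

lemma case_lm:
  assumes "young nu" "step lam nu"
  shows "good 0 lam lam nu nu"
  unfolding good_def using assms step_refl SH_same SV_same by simp

lemma case_ln:
  assumes "young mu" "step lam mu"
  shows "good 0 lam mu lam mu"
  unfolding good_def using assms step_refl SH_same SV_same by simp

lemma case_disj:
  assumes ym: "young mu" and yn: "young nu" and sm: "lam \<subseteq> mu" and sn: "lam \<subseteq> nu"
    and dm: "dom2 (mu - lam)" and dn: "dom2 (nu - lam)"
    and dj: "(nu - lam) \<inter> (mu - lam) = {}"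
  shows "good 0 lam mu nu (lam \<union> (nu - lam) \<union> (mu - lam))"
proof -
  have e: "lam \<union> (nu - lam) \<union> (mu - lam) = mu \<union> nu" using sm sn by auto
  have d1: "(mu \<union> nu) - mu = nu - lam" using dj sm sn by auto
  have d2: "(mu \<union> nu) - nu = mu - lam" using dj sm sn by auto
  have i: "mu \<inter> nu = lam" using dj sm sn by auto
  have fm: "finite mu" "finite nu" using ym yn youngD(1) by auto
  have "card (mu \<union> nu) + card (mu \<inter> nu) = card mu + card nu"
    using card_Un_Int[OF fm] by simp
  then have cd: "card (mu \<union> nu) + card lam = card mu + card nu" using i by simp
  have st1: "step mu (mu \<union> nu)" unfolding step_def using d1 dn by auto
  have st2: "step nu (mu \<union> nu)" unfolding step_def using d2 dm by auto
  have ne: "mu \<noteq> nu"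
  proof
    assume "mu = nu"
    then have "nu - lam = {}" using dj by simp
    then have "card (nu - lam) = 0" by (simp only: card.empty)
    then show False using dom2_card[OF dn] by simp
  qed
  have "SH mu (mu \<union> nu) = SH lam nu" by (rule SH_cong[OF d1])
  moreover have "SV nu (mu \<union> nu) = SV lam mu" by (rule SV_cong[OF d2])
  ultimately have "SV lam mu + SH mu (mu \<union> nu) + SH lam nu + SV nu (mu \<union> nu) + (if (0::int) = -1 then 1 else 0)
     = 2 * (SV lam mu + SH lam nu)" by simp
  then have ev: "even (SV lam mu + SH mu (mu \<union> nu) + SH lam nu + SV nu (mu \<union> nu) + (if (0::int) = -1 then 1 else 0))"
    by (simp only:) simp
  show ?thesis unfolding e
    by (rule goodI[OF young_Un[OF ym yn] st1 st2]) (use cd ne ev in simp_all)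
qed

lemma first_cell:
  assumes yZ: "young Z" and yY: "young Y" and pY: "p \<in> Y" and qZ: "q \<in> Z"
    and le: "fst p \<le> fst q" "snd p \<le> snd q"
  shows "p \<in> Z"
proof -
  obtain a b where p: "p = (a, b)" by (cases p)
  obtain c d where q: "q = (c, d)" by (cases q)
  have "1 \<le> a" "1 \<le> b" using youngD(2,3)[OF yY] pY p by auto
  then show ?thesis using youngD(4)[OF yZ, of c d a b] qZ le p q by simp
qed

lemma overlap_config:
  assumes ym: "young mu" and yn: "young nu"
    and dn: "dom2 (nu - lam)" and dm: "dom2 (mu - lam)"
    and x: "(nu - lam) \<inter> (mu - lam) = {x}"
  shows "\<exists>k l. x = (k, l) \<and> ((nu - lam = {(k, l), (k, l + 1)} \<and> mu - lam = {(k, l), (k + 1, l)}) \<or>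
                 (nu - lam = {(k, l), (k + 1, l)} \<and> mu - lam = {(k, l), (k, l + 1)}))"
proof -
  obtain a b where g: "nu - lam = {(a, b), (a + 1, b)} \<or> nu - lam = {(a, b), (a, b + 1)}"
    using dn unfolding dom2_def by blast
  obtain a' b' where g': "mu - lam = {(a', b'), (a' + 1, b')} \<or> mu - lam = {(a', b'), (a', b' + 1)}"
    using dm unfolding dom2_def by blast
  have xn: "x \<in> nu - lam" and xm: "x \<in> mu - lam" using x by auto
  have abn: "(a, b) \<in> nu - lam" using g by auto
  have "x \<in> {(a, b), (a + 1, b)} \<or> x \<in> {(a, b), (a, b + 1)}" using g xn by metis
  then have le1: "fst (a, b) \<le> fst x \<and> snd (a, b) \<le> snd x" by auto
  have "(a, b) \<in> mu" using first_cell[OF ym yn, of "(a, b)" x] abn xm le1 by simp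
  then have "(a, b) \<in> (nu - lam) \<inter> (mu - lam)" using abn by auto
  then have x1: "x = (a, b)" using x by auto
  have abm: "(a', b') \<in> mu - lam" using g' by auto
  have "x \<in> {(a', b'), (a' + 1, b')} \<or> x \<in> {(a', b'), (a', b' + 1)}" using g' xm by metis
  then have le2: "fst (a', b') \<le> fst x \<and> snd (a', b') \<le> snd x" by auto
  have "(a', b') \<in> nu" using first_cell[OF yn ym, of "(a', b')" x] abm xn le2 by simp
  then have "(a', b') \<in> (nu - lam) \<inter> (mu - lam)" using abm by auto
  then have x2: "x = (a', b')" using x by auto
  have ne: "nu - lam \<noteq> mu - lam"
  proof
    assume "nu - lam = mu - lam"
    then have "card ((nu - lam) \<inter> (mu - lam)) = 2" using dom2_card[OF dn] by simp
    then show False using x by simp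
  qed
  have aa: "a' = a" "b' = b" using x1 x2 by auto
  show ?thesis
  proof (rule disjE[OF g])
    assume h: "nu - lam = {(a, b), (a + 1, b)}"
    show ?thesis
    proof (rule disjE[OF g'])
      assume "mu - lam = {(a', b'), (a' + 1, b')}"
      then show ?thesis using h ne aa by simp
    next
      assume "mu - lam = {(a', b'), (a', b' + 1)}"
      then show ?thesis using h x1 aa by blast
    qed
  next
    assume h: "nu - lam = {(a, b), (a, b + 1)}"
    show ?thesis
    proof (rule disjE[OF g'])
      assume "mu - lam = {(a', b'), (a' + 1, b')}"
      then show ?thesis using h x1 aa by blast
    next
      assume "mu - lam = {(a', b'), (a', b' + 1)}"
      then show ?thesis using h ne aa by simp
    qed
  qed
qed

lemma overlap_geom:
  assumes yl: "young lam" and yX: "young X" and yY: "young Y" and sX: "lam \<subseteq> X" and sY: "lam \<subseteq> Y"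
    and dX: "X - lam = {(k, l), (k, l + 1)}" and dY: "Y - lam = {(k, l), (k + 1, l)}"
    and R: "R = lam \<union> (X - lam) \<union> (Y - lam) \<union> {(k + 1, l + 1)}"
  shows "young R" "R - X = {(k + 1, l), (k + 1, l + 1)}" "R - Y = {(k, l + 1), (k + 1, l + 1)}"
    "card R + card lam = card X + card Y" "X \<subseteq> R" "Y \<subseteq> R"
proof -
  have kl: "(k, l) \<in> X" "(k, l) \<notin> lam" using dX by auto
  have k1: "1 \<le> k" "1 \<le> l" using youngD(2,3)[OF yX kl(1)] by auto
  have n4: "(k + 1, l + 1) \<notin> lam"
  proof
    assume "(k + 1, l + 1) \<in> lam"
    then have "(k, l) \<in> lam" using youngD(4)[OF yl, of "k+1" "l+1" k l] k1 by simp
    then show False using kl by simp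
  qed
  have n2: "(k, l + 1) \<notin> lam" "(k + 1, l) \<notin> lam" using dX dY by auto
  have XY: "X = lam \<union> {(k, l), (k, l + 1)}" "Y = lam \<union> {(k, l), (k + 1, l)}"
    using dX dY sX sY by auto
  have R': "R = lam \<union> {(k, l), (k, l + 1), (k + 1, l), (k + 1, l + 1)}" using R dX dY by auto
  show "R - X = {(k + 1, l), (k + 1, l + 1)}" using R' XY n2 n4 kl by auto
  show "R - Y = {(k, l + 1), (k + 1, l + 1)}" using R' XY n2 n4 kl by auto
  show "X \<subseteq> R" "Y \<subseteq> R" using R' XY by auto
  have fl: "finite lam" using youngD(1)[OF yl] .
  have c4: "card R = card lam + 4"
  proof -
    have "card R = card lam + card {(k, l), (k, l + 1), (k + 1, l), (k + 1, l + 1)}"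
      unfolding R' by (rule card_Un_disjoint) (use fl kl n2 n4 in auto)
    then show ?thesis by simp
  qed
  have c2: "card X = card lam + 2" "card Y = card lam + 2"
    using card_step[OF youngD(1)[OF yX] sX] card_step[OF youngD(1)[OF yY] sY]
      dX dY dom2_vert dom2_horiz by auto
  show "card R + card lam = card X + card Y" using c4 c2 by simp
  show "young R" unfolding young_def
  proof (intro conjI allI impI)
    show "finite R" unfolding R' using fl by simp
  next
    fix a b assume "(a, b) \<in> R" then show "1 \<le> a" unfolding R' using youngD(2)[OF yl] k1 by auto
  next
    fix a b assume "(a, b) \<in> R" then show "1 \<le> b" unfolding R' using youngD(3)[OF yl] k1 by auto
  next
    fix a b a' b' assume ab: "(a, b) \<in> R" and h: "1 \<le> a'" "a' \<le> a" "1 \<le> b'" "b' \<le> b"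
    have RXY: "R = X \<union> Y \<union> {(k + 1, l + 1)}" using R' XY by auto
    show "(a', b') \<in> R"
    proof (cases "(a, b) \<in> X \<union> Y")
      case True
      then have "(a', b') \<in> X \<union> Y" using youngD(4)[OF young_Un[OF yX yY] True h] by simp
      then show ?thesis using RXY by auto
    next
      case False
      then have ab': "a = k + 1" "b = l + 1" using ab RXY by auto
      show ?thesis
      proof (cases "b' \<le> l")
        case True
        have "(k + 1, l) \<in> Y" using XY by auto
        then have "(a', b') \<in> Y" using youngD(4)[OF yY, of "k+1" l a' b'] h ab' True by simp
        then show ?thesis using RXY by auto
      next
        case False
        then have b': "b' = l + 1" using h ab' by simp
        show ?thesis
        proof (cases "a' \<le> k")
          case True
          have "(k, l + 1) \<in> X" using XY by auto
          then have "(a', b') \<in> X" using youngD(4)[OF yX, of k "l+1" a' b'] h b' True by simp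
          then show ?thesis using RXY by auto
        next
          case False
          then have "a' = k + 1" using h ab' by simp
          then show ?thesis using b' RXY by auto
        qed
      qed
    qed
  qed
qed

lemma same_vert:
  assumes yl: "young lam" and ym: "young mu" and sm: "lam \<subseteq> mu"
    and d: "mu - lam = {(k, l), (k + 1, l)}"
  shows "good 0 lam mu mu (add_col mu (l + 1))"
proof -
  have kl: "(k, l) \<in> mu" "(k, l) \<notin> lam" "(k + 1, l) \<in> mu" using d by auto
  have k1: "1 \<le> k" "1 \<le> l" using youngD(2,3)[OF ym kl(1)] by auto
  have n1: "(k, l + 1) \<notin> lam"
  proof
    assume "(k, l + 1) \<in> lam"
    then have "(k, l) \<in> lam" using youngD(4)[OF yl, of k "l+1" k l] k1 by simp
    then show False using kl by simp
  qed
  have n2: "(k, l + 1) \<notin> mu"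
  proof
    assume "(k, l + 1) \<in> mu"
    then have "(k, l + 1) \<in> mu - lam" using n1 by simp
    then have "(k, l + 1) \<in> {(k, l), (k + 1, l)}" by (simp only: d)
    then show False by simp
  qed
  let ?c = "col_len mu (l + 1)"
  have ck: "?c < k"
  proof (rule ccontr)
    assume "\<not> ?c < k"
    then have "(k, l + 1) \<in> mu" using young_col[OF ym, of "l + 1" k] k1 by simp
    then show False using n2 by simp
  qed
  have c2: "(?c + 2, l) \<in> mu" using youngD(4)[OF ym kl(3), of "?c + 2" l] ck k1 by simp
  have yr: "young (add_col mu (l + 1))" and m1: "(?c + 1, l + 1) \<notin> mu" and m2: "(?c + 2, l + 1) \<notin> mu"
    using young_add_col[OF ym, of "l + 1"] c2 by auto
  have D: "add_col mu (l + 1) - mu = {(?c + 1, l + 1), (?c + 1 + 1, l + 1)}"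
    using m1 m2 unfolding add_col_def by auto
  have sub: "mu \<subseteq> add_col mu (l + 1)" unfolding add_col_def by auto
  have st: "step mu (add_col mu (l + 1))" unfolding step_def using sub D dom2_vert by simp
  have cd: "card (add_col mu (l + 1)) = card mu + 2"
    using card_step[OF youngD(1)[OF yr] sub] D dom2_vert by simp
  have cm: "card mu = card lam + 2"
    using card_step[OF youngD(1)[OF ym] sm] d dom2_vert by simp
  have e1: "SV lam mu = (if odd l then 1 else 0)" "SH lam mu = (if even l then 1 else 0)"
    using SV_vert[OF d] SH_vert[OF d] by auto
  have e2: "SH mu (add_col mu (l + 1)) = (if odd l then 1 else 0)"
    "SV mu (add_col mu (l + 1)) = (if even l then 1 else 0)"
    using SV_vert[OF D] SH_vert[OF D] by auto
  show ?thesis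
    by (rule goodI[OF yr st st]) (use cd cm e1 e2 in \<open>cases "even l"; simp\<close>)+
qed

lemma same_horiz:
  assumes yl: "young lam" and ym: "young mu" and sm: "lam \<subseteq> mu"
    and d: "mu - lam = {(k, l), (k, l + 1)}"
  shows "good 0 lam mu mu (add_row mu (k + 1))"
proof -
  have kl: "(k, l) \<in> mu" "(k, l) \<notin> lam" "(k, l + 1) \<in> mu" using d by auto
  have k1: "1 \<le> k" "1 \<le> l" using youngD(2,3)[OF ym kl(1)] by auto
  have n1: "(k + 1, l) \<notin> lam"
  proof
    assume "(k + 1, l) \<in> lam"
    then have "(k, l) \<in> lam" using youngD(4)[OF yl, of "k+1" l k l] k1 by simp
    then show False using kl by simp
  qed
  have n2: "(k + 1, l) \<notin> mu"
  proof
    assume "(k + 1, l) \<in> mu"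
    then have "(k + 1, l) \<in> mu - lam" using n1 by simp
    then have "(k + 1, l) \<in> {(k, l), (k, l + 1)}" by (simp only: d)
    then show False by simp
  qed
  let ?c = "row_len mu (k + 1)"
  have ck: "?c < l"
  proof (rule ccontr)
    assume "\<not> ?c < l"
    then have "(k + 1, l) \<in> mu" using young_row[OF ym, of "k + 1" l] k1 by simp
    then show False using n2 by simp
  qed
  have c2: "(k, ?c + 2) \<in> mu" using youngD(4)[OF ym kl(3), of k "?c + 2"] ck k1 by simp
  have yr: "young (add_row mu (k + 1))" and m1: "(k + 1, ?c + 1) \<notin> mu" and m2: "(k + 1, ?c + 2) \<notin> mu"
    using young_add_row[OF ym, of "k + 1"] c2 by auto
  have D: "add_row mu (k + 1) - mu = {(k + 1, ?c + 1), (k + 1, ?c + 1 + 1)}"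
    using m1 m2 unfolding add_row_def by auto
  have sub: "mu \<subseteq> add_row mu (k + 1)" unfolding add_row_def by auto
  have st: "step mu (add_row mu (k + 1))" unfolding step_def using sub D dom2_horiz by simp
  have cd: "card (add_row mu (k + 1)) = card mu + 2"
    using card_step[OF youngD(1)[OF yr] sub] D dom2_horiz by simp
  have cm: "card mu = card lam + 2"
    using card_step[OF youngD(1)[OF ym] sm] d dom2_horiz by simp
  have e1: "SV lam mu = 0" "SH lam mu = 0"
    using SV_horiz[OF d] SH_horiz[OF d] by auto
  have e2: "SH mu (add_row mu (k + 1)) = 0" "SV mu (add_row mu (k + 1)) = 0"
    using SV_horiz[OF D] SH_horiz[OF D] by auto
  show ?thesis
    by (rule goodI[OF yr st st]) (use cd cm e1 e2 in simp)+
qed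

lemma vd_not_horiz: "\<not> vertical_domino {(k, l), (k, l + 1)}"
  unfolding vertical_domino_def by (auto simp: doubleton_eq_iff)

lemma vd_is_vert: "vertical_domino {(k, l), (k + 1, l)}"
  unfolding vertical_domino_def by blast

lemma min_vert: "Min {(k::nat, l::nat), (k + 1, l)} = (k, l)"
  by (simp add: less_eq_prod_def)

lemma min_horiz: "Min {(k::nat, l::nat), (k, l + 1)} = (k, l)"
  by (simp add: less_eq_prod_def)

lemma local_good_gen:
  assumes yl: "young lam" and ym: "young mu" and yn: "young nu"
    and sm: "lam \<subseteq> mu" and sn: "lam \<subseteq> nu"
    and dm: "dom2 (mu - lam)" and dn: "dom2 (nu - lam)"
    and nm: "lam \<noteq> mu" and nn: "lam \<noteq> nu"
  shows "good 0 lam mu nu (local_rule 0 lam mu nu) \<and> local_rule 0 lam nu mu = local_rule 0 lam mu nu"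
proof -
  define g where "g = nu - lam"
  define g' where "g' = mu - lam"
  have LR: "local_rule 0 lam mu nu =
      (if g \<inter> g' = {} then lam \<union> g \<union> g'
       else if card (g \<inter> g') = 1 then
         (let (k, l) = the_elem (g \<inter> g') in lam \<union> g \<union> g' \<union> {(k + 1, l + 1)})
       else if vertical_domino g then add_col (lam \<union> g) (snd (Min g) + 1)
       else add_row (lam \<union> g) (fst (Min g) + 1))"
    using nm nn unfolding local_rule_def g_def g'_def Let_def by simp
  have LR': "local_rule 0 lam nu mu =
      (if g' \<inter> g = {} then lam \<union> g' \<union> g
       else if card (g' \<inter> g) = 1 then
         (let (k, l) = the_elem (g' \<inter> g) in lam \<union> g' \<union> g \<union> {(k + 1, l + 1)})
       else if vertical_domino g' then add_col (lam \<union> g') (snd (Min g') + 1)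
       else add_row (lam \<union> g') (fst (Min g') + 1))"
    using nm nn unfolding local_rule_def g_def g'_def Let_def by simp
  have mu_eq: "mu = lam \<union> g'" and nu_eq: "nu = lam \<union> g" using sm sn g_def g'_def by auto
  show ?thesis
  proof (cases "g \<inter> g' = {}")
    case True
    have "good 0 lam mu nu (lam \<union> (nu - lam) \<union> (mu - lam))"
      by (rule case_disj[OF ym yn sm sn dm dn]) (use True g_def g'_def in simp)
    moreover have "g' \<inter> g = {}" using True by auto
    then have e2: "local_rule 0 lam nu mu = lam \<union> g \<union> g'" using LR' by (simp add: Un_ac)
    moreover have e1: "local_rule 0 lam mu nu = lam \<union> g \<union> g'" using LR True by simp
    ultimately show ?thesis unfolding g_def g'_def by simp
  next
    case False
    note ne = False
    show ?thesis
    proof (cases "card (g \<inter> g') = 1")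
      case True
      then obtain x where x: "g \<inter> g' = {x}" by (rule card_1_singletonE)
      obtain k l where kl: "x = (k, l)"
        and conf: "(nu - lam = {(k, l), (k, l + 1)} \<and> mu - lam = {(k, l), (k + 1, l)}) \<or>
                 (nu - lam = {(k, l), (k + 1, l)} \<and> mu - lam = {(k, l), (k, l + 1)})"
        using overlap_config[OF ym yn dn dm, of x] x g_def g'_def by blast
      have x': "g' \<inter> g = {x}" using x by auto
      define R where "R = lam \<union> g \<union> g' \<union> {(k + 1, l + 1)}"
      have LRR: "local_rule 0 lam mu nu = R" using LR ne True x kl R_def by simp
      have LRR': "local_rule 0 lam nu mu = R" using LR' ne True x' kl R_def
        by (simp add: Int_commute Un_ac)
      have "good 0 lam mu nu R"
      proof (rule disjE[OF conf])
        assume c: "nu - lam = {(k, l), (k, l + 1)} \<and> mu - lam = {(k, l), (k + 1, l)}"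
        have RR: "R = lam \<union> (nu - lam) \<union> (mu - lam) \<union> {(k + 1, l + 1)}"
          using R_def g_def g'_def by simp
        note G = overlap_geom[OF yl yn ym sn sm conjunct1[OF c] conjunct2[OF c] RR]
        have s1: "step mu R" unfolding step_def using G(3,6) dom2_horiz dom2_vert by simp
        have s2: "step nu R" unfolding step_def using G(2,5) dom2_horiz dom2_vert by simp
        have e: "SV lam mu = (if odd l then 1 else 0)" "SH lam nu = 0"
          "SH mu R = (if odd l then 1 else 0)" "SV nu R = 0"
          using SV_vert[OF conjunct2[OF c]] SH_horiz[OF conjunct1[OF c]]
            SH_vert[OF G(3)] SV_horiz[OF G(2)] by auto
        have mn: "mu \<noteq> nu" using c by (auto simp: doubleton_eq_iff)
        show ?thesis
          by (rule goodI[OF G(1) s1 s2]) (use G(4) e mn in \<open>cases "even l"; simp\<close>)+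
      next
        assume c: "nu - lam = {(k, l), (k + 1, l)} \<and> mu - lam = {(k, l), (k, l + 1)}"
        have RR: "R = lam \<union> (mu - lam) \<union> (nu - lam) \<union> {(k + 1, l + 1)}"
          unfolding R_def g_def g'_def by blast
        note G = overlap_geom[OF yl ym yn sm sn conjunct2[OF c] conjunct1[OF c] RR]
        have s1: "step mu R" unfolding step_def using G(2,5) dom2_horiz dom2_vert by simp
        have s2: "step nu R" unfolding step_def using G(3,6) dom2_horiz dom2_vert by simp
        have e: "SV lam mu = 0" "SH lam nu = (if even l then 1 else 0)"
          "SH mu R = 0" "SV nu R = (if even l then 1 else 0)"
          using SV_horiz[OF conjunct2[OF c]] SH_vert[OF conjunct1[OF c]]
            SH_horiz[OF G(2)] SV_vert[OF G(3)] by auto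
        have mn: "mu \<noteq> nu" using c by (auto simp: doubleton_eq_iff)
        show ?thesis
          by (rule goodI[OF G(1) s1 s2]) (use G(4) e mn in \<open>cases "even l"; simp\<close>)+
      qed
      then show ?thesis using LRR LRR' by simp
    next
      case False
      have c2: "card g = 2" "card g' = 2" using dom2_card dm dn g_def g'_def by auto
      have fg: "finite g" using c2(1) by (intro card_ge_0_finite) simp
      have "card (g \<inter> g') \<le> card g" by (rule card_mono[OF fg]) auto
      moreover have "card (g \<inter> g') \<noteq> 0" using ne fg by simp
      ultimately have "card (g \<inter> g') = card g" using False c2 by linarith
      then have "g \<inter> g' = g" using card_subset_eq[OF fg, of "g \<inter> g'"] by auto
      moreover have "finite g'" using c2(2) by (intro card_ge_0_finite) simp
      ultimately have "g \<inter> g' = g'" using card_subset_eq[of g' "g \<inter> g'"] c2 by auto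
      then have gg: "g = g'" using \<open>g \<inter> g' = g\<close> by simp
      then have mn: "mu = nu" using mu_eq nu_eq by simp
      have sym: "local_rule 0 lam nu mu = local_rule 0 lam mu nu" using mn by simp
      obtain k l where gf: "g = {(k, l), (k + 1, l)} \<or> g = {(k, l), (k, l + 1)}"
        using dn g_def unfolding dom2_def by blast
      have lg: "lam \<union> g = mu" using nu_eq mn by simp
      have gmu: "mu - lam = g" using gg g'_def by simp
      have LR3: "local_rule 0 lam mu nu = (if vertical_domino g then add_col (lam \<union> g) (snd (Min g) + 1)
         else add_row (lam \<union> g) (fst (Min g) + 1))" using LR ne False by simp
      show ?thesis
      proof (rule disjE[OF gf])
        assume v: "g = {(k, l), (k + 1, l)}"
        have "local_rule 0 lam mu nu = add_col mu (l + 1)"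
          unfolding LR3 lg using v vd_is_vert min_vert by simp
        moreover have "good 0 lam mu mu (add_col mu (l + 1))"
          by (rule same_vert[OF yl ym sm]) (use gmu v in simp)
        ultimately show ?thesis using sym mn by simp
      next
        assume h: "g = {(k, l), (k, l + 1)}"
        have "local_rule 0 lam mu nu = add_row mu (k + 1)"
          unfolding LR3 lg using h vd_not_horiz min_horiz by simp
        moreover have "good 0 lam mu mu (add_row mu (k + 1))"
          by (rule same_horiz[OF yl ym sm]) (use gmu h in simp)
        ultimately show ?thesis using sym mn by simp
      qed
    qed
  qed
qed

lemma local_good:
  assumes yl: "young lam" and ym: "young mu" and yn: "young nu"
    and sm: "step lam mu" and sn: "step lam nu"
    and m: "m = 1 \<or> m = -1 \<or> m = 0"
    and mz: "m \<noteq> 0 \<Longrightarrow> mu = lam \<and> nu = lam"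
  shows "good m lam mu nu (local_rule m lam mu nu) \<and> local_rule m lam nu mu = local_rule m lam mu nu"
proof -
  consider "m = 1" | "m = -1" | "m = 0" using m by blast
  then show ?thesis
  proof cases
    case 1
    then have "mu = lam" "nu = lam" using mz by auto
    then show ?thesis using case_p1[OF yl] 1 by (simp add: local_rule_def)
  next
    case 2
    then have "mu = lam" "nu = lam" using mz by auto
    then show ?thesis using case_m1[OF yl] 2 by (simp add: local_rule_def)
  next
    case 3
    show ?thesis
    proof (cases "lam = mu")
      case True
      then show ?thesis using case_lm[OF yn sn] 3 by (auto simp: local_rule_def)
    next
      case False
      note nm = False
      show ?thesis
      proof (cases "lam = nu")
        case True
        then show ?thesis using case_ln[OF ym sm] 3 nm by (auto simp: local_rule_def)
      next
        case False
        have "lam \<subseteq> mu" "dom2 (mu - lam)" using sm nm unfolding step_def by auto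
        moreover have "lam \<subseteq> nu" "dom2 (nu - lam)" using sn False unfolding step_def by auto
        ultimately show ?thesis using local_good_gen[OF yl ym yn] nm False 3 by simp
      qed
    qed
  qed
qed

lemma growth_0: "growth r \<pi> a 0 = staircase r"
  by (cases a) simp_all

lemma Mat_cases: "Mat \<pi> i j = 1 \<or> Mat \<pi> i j = -1 \<or> Mat \<pi> i j = 0"
  unfolding Mat_def by auto

lemma Mat_nz: "1 \<le> j \<Longrightarrow> Mat \<pi> i j \<noteq> 0 \<longleftrightarrow> \<bar>\<pi> i\<bar> = int j"
  unfolding Mat_def by auto

lemma row_stat:
  "(\<forall>j\<in>{1..b}. Mat \<pi> (a + 1) j = 0) \<Longrightarrow> growth r \<pi> a b = growth r \<pi> (Suc a) b"
proof (induction b)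
  case 0
  then show ?case by (simp add: growth_0)
next
  case (Suc b)
  then have "growth r \<pi> a b = growth r \<pi> (Suc a) b" by auto
  moreover have "Mat \<pi> (a + 1) (b + 1) = 0" using Suc.prems by auto
  ultimately show ?case by (simp add: local_rule_def growth.simps(3))
qed

lemma col_stat:
  "(\<forall>i\<in>{1..a}. Mat \<pi> i (b + 1) = 0) \<Longrightarrow> growth r \<pi> a b = growth r \<pi> a (Suc b)"
proof (induction a)
  case 0
  then show ?case by simp
next
  case (Suc a)
  then have "growth r \<pi> a b = growth r \<pi> a (Suc b)" by auto
  moreover have "Mat \<pi> (a + 1) (b + 1) = 0" using Suc.prems by auto
  ultimately show ?case by (simp add: local_rule_def)
qed

declare growth.simps(3)[simp del]

context
  fixes r n :: nat and \<pi> :: "nat \<Rightarrow> int"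
  assumes sp: "signed_perm n \<pi>"
begin

lemma sp_uniq: "i \<in> {1..n} \<Longrightarrow> i' \<in> {1..n} \<Longrightarrow> \<bar>\<pi> i\<bar> = \<bar>\<pi> i'\<bar> \<Longrightarrow> i = i'"
proof -
  assume i: "i \<in> {1..n}" and i': "i' \<in> {1..n}" and e: "\<bar>\<pi> i\<bar> = \<bar>\<pi> i'\<bar>"
  have "nat \<bar>\<pi> i\<bar> \<in> {1..n}" using sp i unfolding signed_perm_def by blast
  then have "\<exists>!x. x \<in> {1..n} \<and> nat \<bar>\<pi> x\<bar> = nat \<bar>\<pi> i\<bar>" using sp unfolding signed_perm_def by blast
  then show "i = i'" using i i' e by metis
qed

lemma mz_square:
  assumes a: "a < n" and b: "b < n" and m: "Mat \<pi> (a + 1) (b + 1) \<noteq> 0"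
  shows "growth r \<pi> (Suc a) b = growth r \<pi> a b" "growth r \<pi> a (Suc b) = growth r \<pi> a b"
proof -
  have pa: "\<bar>\<pi> (a + 1)\<bar> = int (b + 1)" using Mat_nz[of "b+1" \<pi> "a+1"] m by simp
  have "\<forall>j\<in>{1..b}. Mat \<pi> (a + 1) j = 0"
  proof
    fix j assume j: "j \<in> {1..b}"
    show "Mat \<pi> (a + 1) j = 0"
    proof (rule ccontr)
      assume "Mat \<pi> (a + 1) j \<noteq> 0"
      then have "\<bar>\<pi> (a + 1)\<bar> = int j" using Mat_nz[of j \<pi> "a+1"] j by simp
      then show False using pa j by simp
    qed
  qed
  then show "growth r \<pi> (Suc a) b = growth r \<pi> a b" using row_stat by metis
  have "\<forall>i\<in>{1..a}. Mat \<pi> i (b + 1) = 0"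
  proof
    fix i assume i: "i \<in> {1..a}"
    show "Mat \<pi> i (b + 1) = 0"
    proof (rule ccontr)
      assume "Mat \<pi> i (b + 1) \<noteq> 0"
      then have "\<bar>\<pi> i\<bar> = int (b + 1)" using Mat_nz[of "b+1" \<pi> i] by simp
      then have "i = a + 1" using sp_uniq[of i "a+1"] pa i a by simp
      then show False using i by simp
    qed
  qed
  then show "growth r \<pi> a (Suc b) = growth r \<pi> a b" using col_stat by metis
qed

definition Pinv :: "nat \<Rightarrow> nat \<Rightarrow> bool" where
  "Pinv a b \<longleftrightarrow> young (growth r \<pi> a b) \<and>
     (\<forall>a'. a = Suc a' \<longrightarrow> step (growth r \<pi> a' b) (growth r \<pi> a b)) \<and>
     (\<forall>b'. b = Suc b' \<longrightarrow> step (growth r \<pi> a b') (growth r \<pi> a b))"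

lemma square_from:
  assumes a: "a < n" and b: "b < n"
    and P1: "Pinv a b" and P2: "Pinv (Suc a) b" and P3: "Pinv a (Suc b)"
  shows "good (Mat \<pi> (a + 1) (b + 1)) (growth r \<pi> a b) (growth r \<pi> (Suc a) b) (growth r \<pi> a (Suc b))
           (growth r \<pi> (Suc a) (Suc b)) \<and>
         local_rule (Mat \<pi> (a + 1) (b + 1)) (growth r \<pi> a b) (growth r \<pi> a (Suc b)) (growth r \<pi> (Suc a) b)
           = growth r \<pi> (Suc a) (Suc b)"
proof -
  have y: "young (growth r \<pi> a b)" "young (growth r \<pi> (Suc a) b)" "young (growth r \<pi> a (Suc b))"
    "step (growth r \<pi> a b) (growth r \<pi> (Suc a) b)" "step (growth r \<pi> a b) (growth r \<pi> a (Suc b))"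
    using P1 P2 P3 unfolding Pinv_def by auto
  have mz: "Mat \<pi> (a + 1) (b + 1) \<noteq> 0 \<Longrightarrow>
      growth r \<pi> (Suc a) b = growth r \<pi> a b \<and> growth r \<pi> a (Suc b) = growth r \<pi> a b"
    using mz_square[OF a b] by simp
  have L: "good (Mat \<pi> (a + 1) (b + 1)) (growth r \<pi> a b) (growth r \<pi> (Suc a) b) (growth r \<pi> a (Suc b))
       (local_rule (Mat \<pi> (a + 1) (b + 1)) (growth r \<pi> a b) (growth r \<pi> (Suc a) b) (growth r \<pi> a (Suc b))) \<and>
     local_rule (Mat \<pi> (a + 1) (b + 1)) (growth r \<pi> a b) (growth r \<pi> a (Suc b)) (growth r \<pi> (Suc a) b) =
     local_rule (Mat \<pi> (a + 1) (b + 1)) (growth r \<pi> a b) (growth r \<pi> (Suc a) b) (growth r \<pi> a (Suc b))"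
    by (rule local_good[OF y Mat_cases mz])
  have e: "growth r \<pi> (Suc a) (Suc b) = local_rule (Mat \<pi> (a + 1) (b + 1)) (growth r \<pi> a b)
      (growth r \<pi> (Suc a) b) (growth r \<pi> a (Suc b))" by (simp add: growth.simps(3))
  show ?thesis unfolding e using L by (simp only:)
qed

lemma Pinv_all: "a \<le> n \<Longrightarrow> b \<le> n \<Longrightarrow> Pinv a b"
proof (induction a arbitrary: b)
  case 0
  then show ?case unfolding Pinv_def using young_staircase step_refl by simp
next
  case (Suc a)
  note outer = Suc.IH
  show ?case using Suc.prems
  proof (induction b)
    case 0
    then show ?case unfolding Pinv_def using young_staircase step_refl by (simp add: growth_0)
  next
    case (Suc b)
    have P1: "Pinv a b" "Pinv a (Suc b)" using outer Suc.prems by auto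
    have P2: "Pinv (Suc a) b" using Suc.IH Suc.prems by auto
    have G: "good (Mat \<pi> (a + 1) (b + 1)) (growth r \<pi> a b) (growth r \<pi> (Suc a) b) (growth r \<pi> a (Suc b))
           (growth r \<pi> (Suc a) (Suc b))"
      using square_from[OF _ _ P1(1) P2 P1(2)] Suc.prems by simp
    then show ?case unfolding Pinv_def using goodD(1,2,3)[OF G] by simp
  qed
qed

lemma square:
  assumes "a < n" "b < n"
  shows "good (Mat \<pi> (a + 1) (b + 1)) (growth r \<pi> a b) (growth r \<pi> (Suc a) b) (growth r \<pi> a (Suc b))
           (growth r \<pi> (Suc a) (Suc b)) \<and>
         local_rule (Mat \<pi> (a + 1) (b + 1)) (growth r \<pi> a b) (growth r \<pi> a (Suc b)) (growth r \<pi> (Suc a) b)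
           = growth r \<pi> (Suc a) (Suc b)"
  using square_from[OF assms Pinv_all Pinv_all Pinv_all] assms by simp

lemma young_growth: "a \<le> n \<Longrightarrow> b \<le> n \<Longrightarrow> young (growth r \<pi> a b)"
  using Pinv_all unfolding Pinv_def by blast

lemma step_right: "a \<le> n \<Longrightarrow> b < n \<Longrightarrow> step (growth r \<pi> a b) (growth r \<pi> a (Suc b))"
  using Pinv_all[of a "Suc b"] unfolding Pinv_def by simp

lemma strict_right:
  assumes "a \<le> n" "b < n" "\<exists>i\<in>{1..a}. Mat \<pi> i (b + 1) \<noteq> 0"
  shows "growth r \<pi> a b \<noteq> growth r \<pi> a (Suc b)"
  using assms
proof (induction a)
  case 0
  then show ?case by simp
next
  case (Suc a)
  have G: "good (Mat \<pi> (a + 1) (b + 1)) (growth r \<pi> a b) (growth r \<pi> (Suc a) b) (growth r \<pi> a (Suc b))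
           (growth r \<pi> (Suc a) (Suc b))"
    using square[of a b] Suc.prems by simp
  note cd = goodD(4)[OF G]
  show ?case
  proof (cases "Mat \<pi> (a + 1) (b + 1) = 0")
    case False
    then have "growth r \<pi> (Suc a) b = growth r \<pi> a b" "growth r \<pi> a (Suc b) = growth r \<pi> a b"
      using mz_square[of a b] Suc.prems by auto
    then show ?thesis using cd False by auto
  next
    case True
    then obtain i where i: "i \<in> {1..a}" "Mat \<pi> i (b + 1) \<noteq> 0" using Suc.prems
      by (metis atLeastAtMost_iff le_Suc_eq Suc_eq_plus1)
    then have "\<exists>i\<in>{1..a}. Mat \<pi> i (b + 1) \<noteq> 0" by blast
    then have ne: "growth r \<pi> a b \<noteq> growth r \<pi> a (Suc b)" using Suc.IH Suc.prems by simp
    have st: "step (growth r \<pi> a b) (growth r \<pi> a (Suc b))" using step_right[of a b] Suc.prems by simp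
    have fin: "finite (growth r \<pi> a (Suc b))" using young_growth[of a "Suc b"] youngD(1) Suc.prems by simp
    have "card (growth r \<pi> a b) < card (growth r \<pi> a (Suc b))"
      using st ne fin unfolding step_def by (metis psubsetI psubset_card_mono)
    then show ?thesis using cd True by auto
  qed
qed

lemma col_has: "b < n \<Longrightarrow> \<exists>i\<in>{1..n}. Mat \<pi> i (b + 1) \<noteq> 0"
proof -
  assume b: "b < n"
  then have "b + 1 \<in> {1..n}" by simp
  then obtain i where i: "i \<in> {1..n}" "nat \<bar>\<pi> i\<bar> = b + 1" using sp unfolding signed_perm_def by blast
  then have "\<bar>\<pi> i\<bar> = int (b + 1)" by simp
  then show ?thesis using i Mat_nz[of "b+1" \<pi> i] by auto
qed

lemma bottom_dom: "b < n \<Longrightarrow> growth r \<pi> n b \<subseteq> growth r \<pi> n (Suc b) \<and> dom2 (growth r \<pi> n (Suc b) - growth r \<pi> n b)"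
  using step_right[of n b] strict_right[of n b] col_has[of b] unfolding step_def by auto

end

definition Asum :: "nat \<Rightarrow> (nat \<Rightarrow> int) \<Rightarrow> nat \<Rightarrow> nat \<Rightarrow> nat" where
  "Asum r \<pi> a b = (\<Sum>j<b. SH (growth r \<pi> a j) (growth r \<pi> a (Suc j)))"

definition Stair :: "nat \<Rightarrow> (nat \<Rightarrow> int) \<Rightarrow> nat \<Rightarrow> nat" where
  "Stair r \<pi> b = (\<Sum>i<b. SV (growth r \<pi> i i) (growth r \<pi> (Suc i) i) +
      SH (growth r \<pi> (Suc i) i) (growth r \<pi> (Suc i) (Suc i)))"

definition Tsum :: "nat \<Rightarrow> (nat \<Rightarrow> int) \<Rightarrow> nat \<Rightarrow> nat \<Rightarrow> nat" where
  "Tsum r \<pi> a b = Stair r \<pi> b + (\<Sum>i\<in>{b..<a}. SV (growth r \<pi> i b) (growth r \<pi> (Suc i) b))"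

definition ee :: "(nat \<Rightarrow> int) \<Rightarrow> nat \<Rightarrow> nat \<Rightarrow> nat" where
  "ee \<pi> i j = (if j < i \<and> Mat \<pi> (Suc i) (Suc j) = -1 then 1 else 0)"

definition Nlow :: "(nat \<Rightarrow> int) \<Rightarrow> nat \<Rightarrow> nat \<Rightarrow> nat" where
  "Nlow \<pi> a b = (\<Sum>i<a. \<Sum>j<b. ee \<pi> i j)"

lemma Asum_0: "Asum r \<pi> a 0 = 0" unfolding Asum_def by simp
lemma Asum_Suc: "Asum r \<pi> a (Suc b) = Asum r \<pi> a b + SH (growth r \<pi> a b) (growth r \<pi> a (Suc b))"
  unfolding Asum_def by simp

lemma Stair_Suc: "Stair r \<pi> (Suc b) = Stair r \<pi> b + SV (growth r \<pi> b b) (growth r \<pi> (Suc b) b) +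
      SH (growth r \<pi> (Suc b) b) (growth r \<pi> (Suc b) (Suc b))"
  unfolding Stair_def by simp

lemma Tsum_diag: "Tsum r \<pi> a a = Stair r \<pi> a" unfolding Tsum_def by simp

lemma Tsum_Suc: "b \<le> a \<Longrightarrow> Tsum r \<pi> (Suc a) b = Tsum r \<pi> a b + SV (growth r \<pi> a b) (growth r \<pi> (Suc a) b)"
  unfolding Tsum_def by (simp add: sum.atLeastLessThan_Suc)

lemma Nlow_0: "Nlow \<pi> a 0 = 0" unfolding Nlow_def by simp

lemma Nlow_rec: "Nlow \<pi> (Suc a) (Suc b) + Nlow \<pi> a b = Nlow \<pi> (Suc a) b + Nlow \<pi> a (Suc b) + ee \<pi> a b"
  unfolding Nlow_def by (simp add: sum.distrib)

lemma Nlow_diag: "Nlow \<pi> (Suc a) (Suc a) = Nlow \<pi> (Suc a) a"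
proof -
  have "(\<Sum>i<Suc a. ee \<pi> i a) = 0" unfolding ee_def by simp
  then show ?thesis unfolding Nlow_def by (simp add: sum.distrib)
qed

lemma Tsum_0: "Tsum r \<pi> a 0 = 0"
  unfolding Tsum_def Stair_def by (simp add: growth_0 SV_same)

lemma parity_arith:
  fixes A A0 A1 A2 T T0 T1 T2 N N0 N1 N2 v1 v2 h1 h2 x e k1 k2 k3 k4 :: nat
  assumes "A1 + T1 + N1 = 2 * k1" "A2 + T2 + N2 = 2 * k2" "A0 + T0 + N0 = 2 * k3"
    "v1 + h2 + h1 + v2 + x = 2 * k4" "e = x" "A = A1 + h2" "A2 = A0 + h1" "T = T2 + v2"
    "T1 = T0 + v1" "N + N0 = N1 + N2 + e"
  shows "A + T + N + 2 * (N0 + T0 + v1 + A0 + h1) = 2 * (k1 + k2 + k3 + k4)"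
proof -
  have "A + T + N + N0 = A1 + h2 + T2 + v2 + N1 + N2 + x" using assms(5,6,8,10) by simp
  moreover have "2 * (k1 + k2 + k3 + k4) = (A1 + T1 + N1) + (A2 + T2 + N2) + (A0 + T0 + N0) + (v1 + h2 + h1 + v2 + x)"
    using assms(1-4) by simp
  ultimately show ?thesis using assms(7,9) by simp
qed

lemma parity_step:
  fixes A A0 A1 A2 T T0 T1 T2 N N0 N1 N2 v1 v2 h1 h2 x e :: nat
  assumes "even (A1 + T1 + N1)" "even (A2 + T2 + N2)" "even (A0 + T0 + N0)"
    "even (v1 + h2 + h1 + v2 + x)" "e = x" "A = A1 + h2" "A2 = A0 + h1" "T = T2 + v2"
    "T1 = T0 + v1" "N + N0 = N1 + N2 + e"
  shows "even (A + T + N)"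
proof -
  obtain k1 where k1: "A1 + T1 + N1 = 2 * k1" using assms(1) by (elim evenE) simp
  obtain k2 where k2: "A2 + T2 + N2 = 2 * k2" using assms(2) by (elim evenE) simp
  obtain k3 where k3: "A0 + T0 + N0 = 2 * k3" using assms(3) by (elim evenE) simp
  obtain k4 where k4: "v1 + h2 + h1 + v2 + x = 2 * k4" using assms(4) by (elim evenE) simp
  have "A + T + N + 2 * (N0 + T0 + v1 + A0 + h1) = 2 * (k1 + k2 + k3 + k4)"
    by (rule parity_arith[OF k1 k2 k3 k4 assms(5-10)])
  then have "even (A + T + N + 2 * (N0 + T0 + v1 + A0 + h1))" by simp
  then show ?thesis by simp
qed

lemma parity_diag:
  fixes A A1 T T1 N N1 S v h :: nat
  assumes "even (A1 + T1 + N1)" "A = A1 + h" "T = S + v + h" "T1 = S + v" "N = N1"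
  shows "even (A + T + N)"
proof -
  have "A + T + N = (A1 + T1 + N1) + 2 * h" using assms by simp
  then show ?thesis using assms(1) by simp
qed

context
  fixes r n :: nat and \<pi> :: "nat \<Rightarrow> int"
  assumes sp: "signed_perm n \<pi>"
begin

lemma sweep: "b \<le> a \<Longrightarrow> a \<le> n \<Longrightarrow> even (Asum r \<pi> a b + Tsum r \<pi> a b + Nlow \<pi> a b)"
proof (induction a arbitrary: b)
  case 0
  then show ?case by (simp add: Asum_0 Tsum_0 Nlow_0)
next
  case (Suc a)
  note outer = Suc.IH
  show ?case using Suc.prems
  proof (induction b)
    case 0
    then show ?case by (simp add: Asum_0 Tsum_0 Nlow_0)
  next
    case (Suc b)
    show ?case
    proof (cases "Suc b \<le> a")
      case True
      have I1: "even (Asum r \<pi> (Suc a) b + Tsum r \<pi> (Suc a) b + Nlow \<pi> (Suc a) b)"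
        using Suc.IH Suc.prems by simp
      have I2: "even (Asum r \<pi> a (Suc b) + Tsum r \<pi> a (Suc b) + Nlow \<pi> a (Suc b))"
        using outer True Suc.prems by simp
      have I3: "even (Asum r \<pi> a b + Tsum r \<pi> a b + Nlow \<pi> a b)"
        using outer True Suc.prems by simp
      have G: "good (Mat \<pi> (a + 1) (b + 1)) (growth r \<pi> a b) (growth r \<pi> (Suc a) b) (growth r \<pi> a (Suc b))
           (growth r \<pi> (Suc a) (Suc b))"
        using square[OF sp, of a b] True Suc.prems by simp
      note F = goodD(5)[OF G]
      have e: "ee \<pi> a b = (if Mat \<pi> (a + 1) (b + 1) = -1 then 1 else 0)"
        unfolding ee_def using True by simp
      have r1: "Asum r \<pi> (Suc a) (Suc b) = Asum r \<pi> (Suc a) b + SH (growth r \<pi> (Suc a) b) (growth r \<pi> (Suc a) (Suc b))"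
        by (rule Asum_Suc)
      have r2: "Asum r \<pi> a (Suc b) = Asum r \<pi> a b + SH (growth r \<pi> a b) (growth r \<pi> a (Suc b))"
        by (rule Asum_Suc)
      have r3: "Tsum r \<pi> (Suc a) (Suc b) = Tsum r \<pi> a (Suc b) + SV (growth r \<pi> a (Suc b)) (growth r \<pi> (Suc a) (Suc b))"
        using Tsum_Suc True by simp
      have r4: "Tsum r \<pi> (Suc a) b = Tsum r \<pi> a b + SV (growth r \<pi> a b) (growth r \<pi> (Suc a) b)"
        using Tsum_Suc True by simp
      note r5 = Nlow_rec[of \<pi> a b]
      show ?thesis by (rule parity_step[OF I1 I2 I3 F e r1 r2 r3 r4 r5])
    next
      case False
      then have ba: "b = a" using Suc.prems by simp
      have I1: "even (Asum r \<pi> (Suc a) a + Tsum r \<pi> (Suc a) a + Nlow \<pi> (Suc a) a)"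
        using Suc.IH Suc.prems ba by simp
      have r1: "Asum r \<pi> (Suc a) (Suc a) = Asum r \<pi> (Suc a) a + SH (growth r \<pi> (Suc a) a) (growth r \<pi> (Suc a) (Suc a))"
        by (rule Asum_Suc)
      have r2: "Tsum r \<pi> (Suc a) (Suc a) = Stair r \<pi> a + SV (growth r \<pi> a a) (growth r \<pi> (Suc a) a) +
        SH (growth r \<pi> (Suc a) a) (growth r \<pi> (Suc a) (Suc a))"
        using Tsum_diag Stair_Suc by simp
      have r3: "Tsum r \<pi> (Suc a) a = Stair r \<pi> a + SV (growth r \<pi> a a) (growth r \<pi> (Suc a) a)"
        using Tsum_Suc[of a a] Tsum_diag by simp
      note r4 = Nlow_diag[of \<pi> a]
      show ?thesis unfolding ba by (rule parity_diag[OF I1 r1 r2 r3 r4])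
    qed
  qed
qed

end

context
  fixes r n :: nat and \<pi> :: "nat \<Rightarrow> int"
  assumes si: "signed_involution n \<pi>"
begin

lemma sp: "signed_perm n \<pi>" using si unfolding signed_involution_def by simp

lemma inv_cases: "k \<in> {1..n} \<Longrightarrow> \<pi> k = int k \<or> \<pi> k = - int k \<or>
        (\<exists>l\<in>{1..n}. l \<noteq> k \<and> \<pi> k = int l \<and> \<pi> l = int k) \<or>
        (\<exists>l\<in>{1..n}. l \<noteq> k \<and> \<pi> k = - int l \<and> \<pi> l = - int k)"
  using si unfolding signed_involution_def by blast

lemma inv_pos:
  assumes i: "i \<in> {1..n}" and e: "\<pi> i = int j"
  shows "\<pi> j = int i"
proof -
  have i1: "1 \<le> i" using i by simp
  from inv_cases[OF i] show ?thesis
  proof (elim disjE)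
    assume h: "\<pi> i = int i"
    then have "j = i" using e by simp
    then show ?thesis using h by simp
  next
    assume h: "\<pi> i = - int i"
    then have "int j = - int i" using e by simp
    then show ?thesis using i1 by simp
  next
    assume "\<exists>l\<in>{1..n}. l \<noteq> i \<and> \<pi> i = int l \<and> \<pi> l = int i"
    then obtain l where l: "\<pi> i = int l" "\<pi> l = int i" by blast
    then have "l = j" using e by simp
    then show ?thesis using l by simp
  next
    assume "\<exists>l\<in>{1..n}. l \<noteq> i \<and> \<pi> i = - int l \<and> \<pi> l = - int i"
    then obtain l where l: "l \<in> {1..n}" "\<pi> i = - int l" by blast
    then have "int j = - int l" using e by simp
    then show ?thesis using l by simp
  qed
qed

lemma inv_neg:
  assumes i: "i \<in> {1..n}" and e: "\<pi> i = - int j"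
  shows "\<pi> j = - int i"
proof -
  have i1: "1 \<le> i" using i by simp
  from inv_cases[OF i] show ?thesis
  proof (elim disjE)
    assume h: "\<pi> i = int i"
    then have "int i = - int j" using e by simp
    then show ?thesis using i1 by simp
  next
    assume h: "\<pi> i = - int i"
    then have "j = i" using e by simp
    then show ?thesis using h by simp
  next
    assume "\<exists>l\<in>{1..n}. l \<noteq> i \<and> \<pi> i = int l \<and> \<pi> l = int i"
    then obtain l where l: "l \<in> {1..n}" "\<pi> i = int l" by blast
    then have "int l = - int j" using e by simp
    then show ?thesis using l by simp
  next
    assume "\<exists>l\<in>{1..n}. l \<noteq> i \<and> \<pi> i = - int l \<and> \<pi> l = - int i"
    then obtain l where l: "\<pi> i = - int l" "\<pi> l = - int i" by blast
    then have "l = j" using e by simp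
    then show ?thesis using l by simp
  qed
qed

lemma Mat_sym:
  assumes i: "i \<in> {1..n}" and j: "j \<in> {1..n}"
  shows "Mat \<pi> i j = Mat \<pi> j i"
proof -
  have p: "\<pi> i = int j \<longleftrightarrow> \<pi> j = int i" using inv_pos[OF i, of j] inv_pos[OF j, of i] by blast
  have q: "\<pi> i = - int j \<longleftrightarrow> \<pi> j = - int i" using inv_neg[OF i, of j] inv_neg[OF j, of i] by blast
  show ?thesis unfolding Mat_def using p q by simp
qed

lemma growth_sym: "a \<le> n \<Longrightarrow> b \<le> n \<Longrightarrow> growth r \<pi> a b = growth r \<pi> b a"
proof (induction "a + b" arbitrary: a b rule: less_induct)
  case less
  show ?case
  proof (cases a)
    case 0
    then show ?thesis by (simp add: growth_0)
  next
    case (Suc a')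
    show ?thesis
    proof (cases b)
      case 0
      then show ?thesis by (simp add: growth_0)
    next
      case (Suc b')
      have h1: "growth r \<pi> b' a' = growth r \<pi> a' b'" using less \<open>a = Suc a'\<close> Suc by simp
      have h2: "growth r \<pi> (Suc b') a' = growth r \<pi> a' (Suc b')" using less \<open>a = Suc a'\<close> Suc by simp
      have h3: "growth r \<pi> b' (Suc a') = growth r \<pi> (Suc a') b'" using less \<open>a = Suc a'\<close> Suc by simp
      have M: "Mat \<pi> (b' + 1) (a' + 1) = Mat \<pi> (a' + 1) (b' + 1)"
        using Mat_sym[of "b'+1" "a'+1"] less.prems \<open>a = Suc a'\<close> Suc by simp
      have S: "local_rule (Mat \<pi> (a' + 1) (b' + 1)) (growth r \<pi> a' b') (growth r \<pi> a' (Suc b')) (growth r \<pi> (Suc a') b')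
           = growth r \<pi> (Suc a') (Suc b')"
        using square[OF sp, of a' b'] less.prems \<open>a = Suc a'\<close> Suc by simp
      have "growth r \<pi> (Suc b') (Suc a') = local_rule (Mat \<pi> (b' + 1) (a' + 1)) (growth r \<pi> b' a')
          (growth r \<pi> (Suc b') a') (growth r \<pi> b' (Suc a'))" by (simp add: growth.simps(3))
      also have "\<dots> = growth r \<pi> (Suc a') (Suc b')" unfolding h1 h2 h3 M S ..
      finally show ?thesis using \<open>a = Suc a'\<close> Suc by simp
    qed
  qed
qed

lemma Stair_even: "b \<le> n \<Longrightarrow> even (Stair r \<pi> b)"
proof (induction b)
  case 0
  then show ?case unfolding Stair_def by simp
next
  case (Suc b)
  have G: "good (Mat \<pi> (b + 1) (b + 1)) (growth r \<pi> b b) (growth r \<pi> (Suc b) b) (growth r \<pi> b (Suc b))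
           (growth r \<pi> (Suc b) (Suc b))"
    using square[OF sp, of b b] Suc.prems by simp
  have "growth r \<pi> (Suc b) b = growth r \<pi> b (Suc b)" using growth_sym Suc.prems by simp
  then have "even (SV (growth r \<pi> b b) (growth r \<pi> (Suc b) b) + SH (growth r \<pi> (Suc b) b) (growth r \<pi> (Suc b) (Suc b)))"
    using goodD(6)[OF G] by simp
  then show ?case using Suc Stair_Suc[of r \<pi> b] by simp
qed

lemma Nlow_card: "Nlow \<pi> n n = card (barred_two_cycles n \<pi>)"
proof -
  define S where "S = {(i, j). i < n \<and> j < n \<and> j < i \<and> \<pi> (Suc i) = - int (Suc j)}"
  have "Nlow \<pi> n n = (\<Sum>i<n. \<Sum>j<n. of_bool ((i, j) \<in> S))"
    unfolding Nlow_def ee_def S_def Mat_def by (intro sum.cong refl) auto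
  also have "\<dots> = (\<Sum>(i, j)\<in>{..<n} \<times> {..<n}. of_bool ((i, j) \<in> S))"
    by (rule sum.cartesian_product)
  also have "\<dots> = (\<Sum>p\<in>{..<n} \<times> {..<n}. of_bool (p \<in> S))"
    by (rule sum.cong) auto
  also have "\<dots> = card S"
  proof -
    have "S \<subseteq> {..<n} \<times> {..<n}" unfolding S_def by auto
    then have "{..<n} \<times> {..<n} \<inter> {p. p \<in> S} = S" by auto
    then show ?thesis by simp
  qed
  also have "card S = card (barred_two_cycles n \<pi>)"
  proof (rule bij_betw_same_card)
    show "bij_betw (\<lambda>(i, j). {Suc i, Suc j}) S (barred_two_cycles n \<pi>)"
      unfolding bij_betw_def
    proof
      show "inj_on (\<lambda>(i, j). {Suc i, Suc j}) S"
        unfolding inj_on_def S_def by (auto simp: doubleton_eq_iff)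
      show "(\<lambda>(i, j). {Suc i, Suc j}) ` S = barred_two_cycles n \<pi>"
      proof
        show "(\<lambda>(i, j). {Suc i, Suc j}) ` S \<subseteq> barred_two_cycles n \<pi>"
        proof
          fix X assume "X \<in> (\<lambda>(i, j). {Suc i, Suc j}) ` S"
          then obtain i j where ij: "(i, j) \<in> S" "X = {Suc i, Suc j}" by auto
          have h: "i < n" "j < n" "j < i" "\<pi> (Suc i) = - int (Suc j)" using ij S_def by auto
          then have "\<pi> (Suc j) = - int (Suc i)" using inv_neg[of "Suc i" "Suc j"] by simp
          then show "X \<in> barred_two_cycles n \<pi>" unfolding barred_two_cycles_def using h ij
            by (intro CollectI exI[of _ "Suc i"] exI[of _ "Suc j"]) simp
        qed
        show "barred_two_cycles n \<pi> \<subseteq> (\<lambda>(i, j). {Suc i, Suc j}) ` S"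
        proof
          fix X assume "X \<in> barred_two_cycles n \<pi>"
          then obtain k l where kl: "X = {k, l}" "k \<in> {1..n}" "l \<in> {1..n}" "k \<noteq> l"
            "\<pi> k = - int l" "\<pi> l = - int k" unfolding barred_two_cycles_def by blast
          show "X \<in> (\<lambda>(i, j). {Suc i, Suc j}) ` S"
          proof (cases "l < k")
            case True
            then have "(k - 1, l - 1) \<in> S" unfolding S_def using kl by auto
            moreover have "X = (\<lambda>(i, j). {Suc i, Suc j}) (k - 1, l - 1)" using kl by auto
            ultimately show ?thesis by blast
          next
            case False
            then have "(l - 1, k - 1) \<in> S" unfolding S_def using kl by auto
            moreover have "X = (\<lambda>(i, j). {Suc i, Suc j}) (l - 1, k - 1)" using kl by auto
            ultimately show ?thesis by blast
          qed
        qed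
      qed
    qed
  qed
  finally show ?thesis .
qed

lemma main_parity: "even (Asum r \<pi> n n + card (barred_two_cycles n \<pi>))"
proof -
  have "even (Asum r \<pi> n n + Tsum r \<pi> n n + Nlow \<pi> n n)" using sweep[OF sp, of n n] by simp
  moreover have "even (Tsum r \<pi> n n)" using Stair_even[of n] Tsum_diag by simp
  ultimately show ?thesis using Nlow_card by simp
qed

end

definition cyc :: "nat \<Rightarrow> nat \<Rightarrow> nat \<Rightarrow> nat" where
  "cyc a b i = (if a \<le> i \<and> i \<le> b then (if i = a then b else i - 1) else i)"

lemma cyc_perm: "a \<le> b \<Longrightarrow> permutation (cyc a b) \<and> sign (cyc a b) = (-1) ^ (b - a)"
proof (induction "b - a" arbitrary: a)
  case 0
  then have ab: "a = b" by simp
  have "cyc a b = id"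
  proof
    fix i show "cyc a b i = id i" unfolding cyc_def using ab by simp
  qed
  then show ?case using 0 by (simp add: permutation_id)
next
  case (Suc d)
  then have ab: "a < b" by simp
  have IH: "permutation (cyc (Suc a) b) \<and> sign (cyc (Suc a) b) = (-1) ^ (b - Suc a)"
    using Suc ab by simp
  have e: "cyc a b = cyc (Suc a) b \<circ> transpose a (Suc a)"
  proof
    fix i
    show "cyc a b i = (cyc (Suc a) b \<circ> transpose a (Suc a)) i"
      using ab by (cases "i = a"; cases "i = Suc a"; simp add: cyc_def transpose_def)
  qed
  have p: "permutation (cyc a b)" unfolding e
    by (rule permutation_compose[OF conjunct1[OF IH] permutation_swap_id])
  have "sign (cyc a b) = sign (cyc (Suc a) b) * sign (transpose a (Suc a))"
    unfolding e by (rule sign_compose[OF conjunct1[OF IH] permutation_swap_id])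
  also have "\<dots> = (-1) ^ (b - Suc a) * (-1)" using IH sign_swap_id[of a "Suc a"] by simp
  also have "\<dots> = (-1) ^ (b - a)"
  proof -
    have "b - a = Suc (b - Suc a)" using ab by simp
    then show ?thesis by simp
  qed
  finally show ?case using p by simp
qed

lemma word_perm_insert:
  assumes len: "length w = m" and p: "p \<le> m"
  shows "word_perm (take p w @ Suc m # drop p w) = word_perm w \<circ> cyc (Suc p) (Suc m)"
proof
  fix i
  let ?w' = "take p w @ Suc m # drop p w"
  have lw: "length ?w' = Suc m" using len p by simp
  show "word_perm ?w' i = (word_perm w \<circ> cyc (Suc p) (Suc m)) i"
  proof (cases "1 \<le> i \<and> i \<le> Suc m")
    case False
    then show ?thesis unfolding word_perm_def cyc_def using lw len by auto
  next
    case True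
    show ?thesis
    proof (cases "i \<le> p")
      case True
      then have "i - 1 < p" using \<open>1 \<le> i \<and> i \<le> Suc m\<close> by linarith
      then have "?w' ! (i - 1) = w ! (i - 1)" using len p
        by (simp add: nth_append)
      then show ?thesis unfolding word_perm_def cyc_def using lw len True p \<open>1 \<le> i \<and> i \<le> Suc m\<close> by auto
    next
      case False
      show ?thesis
      proof (cases "i = Suc p")
        case True
        then have "?w' ! (i - 1) = Suc m" using len p by (simp add: nth_append)
        then show ?thesis unfolding word_perm_def cyc_def using lw len True p by auto
      next
        case False
        then have ip: "Suc (Suc p) \<le> i" using \<open>\<not> i \<le> p\<close> by simp
        then have "?w' ! (i - 1) = w ! (i - 2)" using len p \<open>1 \<le> i \<and> i \<le> Suc m\<close>
          by (simp add: nth_append nth_Cons' min_def)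
        moreover have "cyc (Suc p) (Suc m) i = i - 1" unfolding cyc_def using ip \<open>1 \<le> i \<and> i \<le> Suc m\<close> by auto
        ultimately show ?thesis unfolding word_perm_def using lw len ip \<open>1 \<le> i \<and> i \<le> Suc m\<close>
          by (auto simp: numeral_2_eq_2)
      qed
    qed
  qed
qed

lemma insort_split:
  "sorted L \<Longrightarrow> x \<notin> set L \<Longrightarrow>
    insort x L = take (length (filter (\<lambda>y. y < x) L)) L @ x # drop (length (filter (\<lambda>y. y < x) L)) L"
proof (induction L)
  case Nil
  then show ?case by simp
next
  case (Cons y ys)
  show ?case
  proof (cases "x \<le> y")
    case True
    then have "x < y" using Cons.prems by auto
    then have "filter (\<lambda>z. z < x) (y # ys) = []" using Cons.prems by (auto simp: filter_empty_conv)
    then show ?thesis using True by simp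
  next
    case False
    then have "y < x" by simp
    then show ?thesis using Cons False by simp
  qed
qed

lemma neg1_pow_parity: "even (x + y) \<Longrightarrow> (-1::int) ^ x = (-1) ^ y"
  by (cases "even x") (auto simp: neg_one_even_power neg_one_odd_power)

lemma card_staircase: "r \<in> {0, 1} \<Longrightarrow> card (staircase r) = r"
proof -
  assume r: "r \<in> {0, 1}"
  have "staircase 0 = {}" unfolding staircase_def by auto
  moreover have "staircase 1 = {(1, 1)}" unfolding staircase_def by auto
  ultimately show ?thesis using r by auto
qed

context
  fixes r N :: nat and D :: "nat \<Rightarrow> cell set"
  assumes r01: "r \<in> {0, 1}" and D0: "D 0 = staircase r"
    and ch: "\<And>j. j < N \<Longrightarrow> young (D (Suc j)) \<and> D j \<subseteq> D (Suc j) \<and> dom2 (D (Suc j) - D j)"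
begin

lemma D_mono: "i \<le> j \<Longrightarrow> j \<le> N \<Longrightarrow> D i \<subseteq> D j"
proof (induction j)
  case 0
  then show ?case by simp
next
  case (Suc j)
  show ?case
  proof (cases "i = Suc j")
    case True
    then show ?thesis by simp
  next
    case False
    then have "D i \<subseteq> D j" using Suc by simp
    then show ?thesis using ch[of j] Suc.prems by auto
  qed
qed

lemma D_young: "j \<le> N \<Longrightarrow> young (D j)"
  using ch[of "j - 1"] D0 young_staircase by (cases j) auto

lemma D_card: "j \<le> N \<Longrightarrow> card (D j) = r + 2 * j"
proof (induction j)
  case 0
  then show ?case using D0 card_staircase[OF r01] by simp
next
  case (Suc j)
  have "card (D (Suc j)) = card (D j) + 2"
    using card_step[OF youngD(1)[OF D_young[OF Suc.prems]]] ch[of j] Suc.prems by simp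
  then show ?case using Suc by simp
qed

lemma syt_new:
  assumes k: "k < N" and c: "c \<in> D (Suc k) - D k"
  shows "syt_of_sdt r D c = (if c = Min (D (Suc k) - D k) then 2 * Suc k - 1 + r else 2 * Suc k + r)"
proof -
  have n0: "c \<notin> D 0" using D_mono[of 0 k] k c by auto
  have L: "(LEAST j. c \<in> D j) = Suc k"
  proof (rule Least_equality)
    show "c \<in> D (Suc k)" using c by simp
  next
    fix y assume y: "c \<in> D y"
    show "Suc k \<le> y"
    proof (rule ccontr)
      assume "\<not> Suc k \<le> y"
      then have "D y \<subseteq> D k" using D_mono[of y k] k by simp
      then show False using y c by auto
    qed
  qed
  have "syt_of_sdt r D c = (let k' = LEAST j. c \<in> D j in
      if c = Min (D k' - D (k' - 1)) then 2 * k' - 1 + r else 2 * k' + r)"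
    unfolding syt_of_sdt_def using n0 by (simp only: if_False)
  also have "\<dots> = (if c = Min (D (Suc k) - D k) then 2 * Suc k - 1 + r else 2 * Suc k + r)"
    by (simp only: L Let_def diff_Suc_1)
  finally show ?thesis .
qed

abbreviation RW :: "nat \<Rightarrow> nat list" where
  "RW k \<equiv> reading_word r k D"

lemma RW_len: "k \<le> N \<Longrightarrow> length (RW k) = r + 2 * k"
  unfolding reading_word_def using D_card by simp

lemma chain_step:
  assumes k: "k < N" and d: "D (Suc k) - D k = {c1, c2}" and lt: "c1 < c2"
    and pk: "permutation (word_perm (RW k))"
  shows "permutation (word_perm (RW (Suc k))) \<and>
    sign (word_perm (RW (Suc k))) = sign (word_perm (RW k)) * (-1) ^ card {y \<in> D k. c1 < y \<and> y < c2}"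
proof -
  define S where "S = D k"
  define f where "f = syt_of_sdt r D"
  define m where "m = r + 2 * k"
  have fS: "finite S" using youngD(1)[OF D_young] k S_def by simp
  have sub: "S \<subseteq> D (Suc k)" using ch[OF k] S_def by simp
  have c12: "c1 \<notin> S" "c2 \<notin> S" "c1 \<noteq> c2" using d lt S_def by auto
  have DS: "D (Suc k) = insert c2 (insert c1 S)" using d sub S_def by auto
  define L where "L = sorted_list_of_set S"
  have Ls: "sorted L" "distinct L" "set L = S" using fS L_def by auto
  define p1 where "p1 = length (filter (\<lambda>y. y < c1) L)"
  define L1 where "L1 = insort c1 L"
  have L1e: "L1 = take p1 L @ c1 # drop p1 L"
    unfolding L1_def p1_def by (rule insort_split) (use Ls c12 in auto)
  have L1s: "sorted L1" "set L1 = insert c1 S" "distinct L1"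
    using Ls c12 L1_def by (auto simp: sorted_insort distinct_insort set_insort_key)
  define p2 where "p2 = length (filter (\<lambda>y. y < c2) L1)"
  have L2e: "insort c2 L1 = take p2 L1 @ c2 # drop p2 L1"
    unfolding p2_def by (rule insort_split) (use L1s c12 in auto)
  have sl: "sorted_list_of_set (D (Suc k)) = insort c2 L1"
  proof -
    have "sorted_list_of_set (insert c1 S) = L1" unfolding L1_def L_def using fS c12 by simp
    moreover have "insert c1 S - {c2} = insert c1 S" using c12 by auto
    ultimately show ?thesis unfolding DS using fS by simp
  qed
  have w: "RW k = map f L" unfolding reading_word_def f_def L_def S_def by simp
  have lenw: "length (map f L) = m" using RW_len[of k] k w m_def by simp
  have Min: "Min (D (Suc k) - D k) = c1" unfolding d using lt by (simp add: min_def order.strict_implies_order)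
  have f1: "f c1 = Suc m" using syt_new[OF k, of c1] d Min f_def m_def by simp
  have f2: "f c2 = Suc (Suc m)" using syt_new[OF k, of c2] d Min c12 f_def m_def by simp
  define w1 where "w1 = take p1 (map f L) @ Suc m # drop p1 (map f L)"
  have mw1: "map f L1 = w1" unfolding L1e w1_def using f1 by (simp add: take_map drop_map)
  have p1m: "p1 \<le> m" unfolding p1_def using lenw length_filter_le[of _ L] by simp
  have lenw1: "length w1 = Suc m" unfolding w1_def using lenw p1m by simp
  have p2m: "p2 \<le> Suc m" unfolding p2_def using lenw1 mw1 length_filter_le[of _ L1]
    by (metis length_map)
  have RW1: "RW (Suc k) = take p2 w1 @ Suc (Suc m) # drop p2 w1"
    unfolding reading_word_def sl L2e f_def[symmetric] mw1[symmetric] using f2 by (simp add: take_map drop_map)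
  have wp1: "word_perm w1 = word_perm (map f L) \<circ> cyc (Suc p1) (Suc m)"
    unfolding w1_def by (rule word_perm_insert[OF lenw p1m])
  have wp2: "word_perm (RW (Suc k)) = word_perm w1 \<circ> cyc (Suc p2) (Suc (Suc m))"
    unfolding RW1 by (rule word_perm_insert[OF lenw1 p2m])
  have cp1: "permutation (cyc (Suc p1) (Suc m)) \<and> sign (cyc (Suc p1) (Suc m)) = (-1) ^ (m - p1)"
    using cyc_perm[of "Suc p1" "Suc m"] p1m by simp
  have cp2: "permutation (cyc (Suc p2) (Suc (Suc m))) \<and> sign (cyc (Suc p2) (Suc (Suc m))) = (-1) ^ (Suc m - p2)"
    using cyc_perm[of "Suc p2" "Suc (Suc m)"] p2m by simp
  have pw: "permutation (word_perm (map f L))" using pk w by simp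
  have pw1: "permutation (word_perm w1)" unfolding wp1 using pw cp1 permutation_compose by blast
  have perm: "permutation (word_perm (RW (Suc k)))" unfolding wp2 using pw1 cp2 permutation_compose by blast
  have sg: "sign (word_perm (RW (Suc k))) = sign (word_perm (RW k)) * (-1) ^ (m - p1) * (-1) ^ (Suc m - p2)"
  proof -
    have "sign (word_perm (RW (Suc k))) = sign (word_perm w1) * sign (cyc (Suc p2) (Suc (Suc m)))"
      unfolding wp2 by (rule sign_compose[OF pw1 conjunct1[OF cp2]])
    moreover have "sign (word_perm w1) = sign (word_perm (map f L)) * sign (cyc (Suc p1) (Suc m))"
      unfolding wp1 by (rule sign_compose[OF pw conjunct1[OF cp1]])
    ultimately show ?thesis using cp1 cp2 w by simp
  qed
  define B where "B = {y \<in> S. c1 < y \<and> y < c2}"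
  have fB: "finite B" using fS B_def by simp
  have p1c: "p1 = card ({y. y < c1} \<inter> S)" unfolding p1_def using Ls distinct_length_filter by metis
  have p2c: "p2 = card ({y. y < c2} \<inter> insert c1 S)" unfolding p2_def using L1s distinct_length_filter by metis
  have "{y. y < c2} \<inter> insert c1 S = insert c1 (({y. y < c1} \<inter> S) \<union> B)"
    using lt c12 unfolding B_def by auto
  moreover have "c1 \<notin> ({y. y < c1} \<inter> S) \<union> B" using c12 B_def by auto
  moreover have "({y. y < c1} \<inter> S) \<inter> B = {}" unfolding B_def by auto
  ultimately have p2e: "p2 = Suc (p1 + card B)" unfolding p2c p1c using fS fB by (simp add: card_Un_disjoint)
  have "card (({y. y < c1} \<inter> S) \<union> B) \<le> card S" by (rule card_mono[OF fS]) (auto simp: B_def)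
  then have "p1 + card B \<le> m" using p1c card_Un_disjoint[OF _ fB \<open>({y. y < c1} \<inter> S) \<inter> B = {}\<close>] fS
    D_card[of k] k S_def m_def by simp
  then have "even ((m - p1) + (Suc m - p2) + card B)" using p2e by presburger
  then have "(-1::int) ^ ((m - p1) + (Suc m - p2)) = (-1) ^ card B" by (rule neg1_pow_parity)
  then have "sign (word_perm (RW (Suc k))) = sign (word_perm (RW k)) * (-1) ^ card B"
    using sg by (simp add: power_add mult.assoc)
  then show ?thesis using perm B_def S_def by simp
qed

lemma chain_vert:
  assumes k: "k < N" and d: "D (Suc k) - D k = {(a, b), (a + 1, b)}"
  shows "card {y \<in> D k. (a, b) < y \<and> y < (a + 1, b)} = b - 1" "1 \<le> b"
proof -
  have yS: "young (D k)" using D_young k by simp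
  have yT: "young (D (Suc k))" using ch[OF k] by simp
  have sub: "D k \<subseteq> D (Suc k)" using ch[OF k] by simp
  have ab: "(a, b) \<in> D (Suc k)" "(a, b) \<notin> D k" "(a + 1, b) \<in> D (Suc k)" "(a + 1, b) \<notin> D k"
    using d by auto
  show b1: "1 \<le> b" using youngD(3)[OF yT ab(1)] .
  have a1: "1 \<le> a" using youngD(2)[OF yT ab(1)] .
  have "{y \<in> D k. (a, b) < y \<and> y < (a + 1, b)} = (\<lambda>l. (a + 1, l)) ` {1..<b}"
  proof
    show "{y \<in> D k. (a, b) < y \<and> y < (a + 1, b)} \<subseteq> (\<lambda>l. (a + 1, l)) ` {1..<b}"
    proof
      fix y assume y: "y \<in> {y \<in> D k. (a, b) < y \<and> y < (a + 1, b)}"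
      obtain y1 y2 where yy: "y = (y1, y2)" by (cases y)
      have yin: "(y1, y2) \<in> D k" and l1: "(a, b) < (y1, y2)" and l2: "(y1, y2) < (a + 1, b)"
        using y yy by auto
      have y21: "1 \<le> y2" using youngD(3)[OF yS yin] .
      show "y \<in> (\<lambda>l. (a + 1, l)) ` {1..<b}"
      proof (cases "y1 = a")
        case True
        then have "b < y2" using l1 by simp
        then have "(a, b) \<in> D k" using youngD(4)[OF yS yin, of a b] True a1 b1 by simp
        then show ?thesis using ab by simp
      next
        case False
        then have "y1 = a + 1" "y2 < b" using l1 l2 by auto
        then show ?thesis using yy y21 by auto
      qed
    qed
    show "(\<lambda>l. (a + 1, l)) ` {1..<b} \<subseteq> {y \<in> D k. (a, b) < y \<and> y < (a + 1, b)}"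
    proof
      fix y assume "y \<in> (\<lambda>l. (a + 1, l)) ` {1..<b}"
      then obtain l where l: "y = (a + 1, l)" "1 \<le> l" "l < b" by auto
      have "(a + 1, l) \<in> D (Suc k)" using youngD(4)[OF yT ab(3), of "a + 1" l] l by simp
      moreover have "(a + 1, l) \<notin> D (Suc k) - D k" using d l by auto
      ultimately have "(a + 1, l) \<in> D k" by simp
      then show "y \<in> {y \<in> D k. (a, b) < y \<and> y < (a + 1, b)}" using l by simp
    qed
  qed
  moreover have "inj_on (\<lambda>l. (a + 1, l)) {1..<b}" by (auto simp: inj_on_def)
  ultimately show "card {y \<in> D k. (a, b) < y \<and> y < (a + 1, b)} = b - 1"
    by (simp add: card_image)
qed

lemma chain_horiz:
  "{y \<in> D k. (a, b) < y \<and> y < (a, b + 1)} = {}"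
proof -
  have "\<not> ((a, b) < y \<and> y < (a, b + 1))" for y :: cell
    by (cases y) auto
  then show ?thesis by auto
qed

lemma chain_sign:
  "k \<le> N \<Longrightarrow> permutation (word_perm (RW k)) \<and>
     sign (word_perm (RW k)) = (-1) ^ (\<Sum>j<k. SH (D j) (D (Suc j)))"
proof (induction k)
  case 0
  have "word_perm (RW 0) = id"
  proof (cases "r = 0")
    case True
    then have "D 0 = {}" using D0 unfolding staircase_def by auto
    then have "RW 0 = []" unfolding reading_word_def by simp
    then show ?thesis unfolding word_perm_def by (auto simp: fun_eq_iff)
  next
    case False
    then have r1: "r = 1" using r01 by simp
    then have D0': "D 0 = {(1, 1)}" using D0 unfolding staircase_def by auto
    then have "syt_of_sdt r D (1, 1) = 1" unfolding syt_of_sdt_def by simp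
    then have "RW 0 = [1]" unfolding reading_word_def using D0' by simp
    then show ?thesis unfolding word_perm_def by (auto simp: fun_eq_iff)
  qed
  then show ?case by (simp add: permutation_id)
next
  case (Suc k)
  then have k: "k < N" by simp
  have IH: "permutation (word_perm (RW k))" "sign (word_perm (RW k)) = (-1) ^ (\<Sum>j<k. SH (D j) (D (Suc j)))"
    using Suc by auto
  obtain a b where g: "D (Suc k) - D k = {(a, b), (a + 1, b)} \<or> D (Suc k) - D k = {(a, b), (a, b + 1)}"
    using ch[OF k] unfolding dom2_def by blast
  show ?case
  proof (rule disjE[OF g])
    assume v: "D (Suc k) - D k = {(a, b), (a + 1, b)}"
    have lt: "(a, b) < (a + 1, b)" by simp
    note cs = chain_step[OF k v lt IH(1)]
    have cb: "card {y \<in> D k. (a, b) < y \<and> y < (a + 1, b)} = b - 1" "1 \<le> b" using chain_vert[OF k v] by auto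
    have sh: "SH (D k) (D (Suc k)) = (if even b then 1 else 0)" using SH_vert[OF v] .
    have "even ((b - 1) + SH (D k) (D (Suc k)))" using sh cb(2) by (cases "even b") auto
    then have "(-1::int) ^ (b - 1) = (-1) ^ SH (D k) (D (Suc k))" by (rule neg1_pow_parity)
    then show ?thesis using cs cb IH(2) by (simp add: power_add)
  next
    assume h: "D (Suc k) - D k = {(a, b), (a, b + 1)}"
    have lt: "(a, b) < (a, b + 1)" by simp
    note cs = chain_step[OF k h lt IH(1)]
    have sh: "SH (D k) (D (Suc k)) = 0" using SH_horiz[OF h] .
    have e: "card {y \<in> D k. (a, b) < y \<and> y < (a, b + 1)} = 0" unfolding chain_horiz by simp
    have "sign (word_perm (RW (Suc k))) = sign (word_perm (RW k))" using cs unfolding e by simp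
    then show ?thesis using cs IH(2) sh by simp
  qed
qed

end

theorem theorem4p4:
  fixes r n d :: nat and \<pi> :: "nat \<Rightarrow> int"
  assumes "r \<in> {0, 1}"
    and "signed_involution n \<pi>"
    and "card (barred_two_cycles n \<pi>) = d"
  shows "sdt_sign r n (insertion_tableau r n \<pi>) = (-1) ^ d"
proof -
  have sp: "signed_perm n \<pi>" using assms(2) unfolding signed_involution_def by simp
  define D where "D = insertion_tableau r n \<pi>"
  have Dk: "D k = growth r \<pi> n k" for k unfolding D_def insertion_tableau_def by simp
  have D0: "D 0 = staircase r" using Dk growth_0 by simp
  have ch: "young (D (Suc j)) \<and> D j \<subseteq> D (Suc j) \<and> dom2 (D (Suc j) - D j)" if j: "j < n" for j
    using young_growth[OF sp, of n "Suc j"] bottom_dom[OF sp j] j unfolding Dk by simp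
  have cs: "sign (word_perm (reading_word r n D)) = (-1) ^ (\<Sum>j<n. SH (D j) (D (Suc j)))"
    using chain_sign[OF assms(1) D0 ch, of n] by simp
  have A: "(\<Sum>j<n. SH (D j) (D (Suc j))) = Asum r \<pi> n n" unfolding Asum_def Dk ..
  have "even (Asum r \<pi> n n + d)" using main_parity[OF assms(2)] assms(3) by simp
  then have "(-1::int) ^ Asum r \<pi> n n = (-1) ^ d" by (rule neg1_pow_parity)
  then show ?thesis unfolding sdt_sign_def D_def[symmetric] cs A .
qed

end
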